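(* There exist absolute constants $C_S,C_K>0$ such that the following holds. Let $n_1,n_2\ge2$, $1\le s_1\le n_1$, $1\le s_2\le n_2$, $1\le R\le\min\{n_1,n_2\}$, $\Gamma\ge1$, $m\ge1$. Then $$\int_0^{\Gamma\sqrt R/\sqrt m}\sqrt{\log N(S^{R,\Gamma}_{s_1,s_2},\|\cdot\|_F,\sqrt m\,\varepsilon)}\,d\varepsilon\le\sqrt{\frac{C_S\Gamma^2R^2(s_1+s_2)\log(\max\{n_1,n_2\})}{m}},$$ $$\int_0^{\Gamma\sqrt R/\sqrt m}\sqrt{\log N(K^{R,\Gamma}_{s_1,s_2},\|\cdot\|_F,\sqrt m\,\varepsilon)}\,d\varepsilon\le\sqrt{\frac{C_K\Gamma^2R^2(s_1+s_2)\log^3(\max\{n_1,n_2\})}{m}}.$$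
   Context: $N(M,\|\cdot\|,\varepsilon)$ is the minimal number of $\|\cdot\|$-balls of radius $\varepsilon$ covering $M$. $S^{R,\Gamma}_{s_1,s_2}$ is the set of $Z=\sum_{r=1}^R\sigma_ru^r(v^r)^T\in\mathbb{R}^{n_1\times n_2}$ with $|\mathrm{supp}(u^r)|\le s_1$, $|\mathrm{supp}(v^r)|\le s_2$, $\|u^r\|_2=\|v^r\|_2=1$, $\|\sigma\|_2\le\Gamma$. With $K_{n,s}=\{z\in\mathbb{R}^n:\|z\|_2\le1,\|z\|_1\le\sqrt s\}$, $K^{R,\Gamma}_{s_1,s_2}$ is the set of $Z=\sum_{r=1}^R\sigma_ru^r(v^r)^T$ with $u^r\in K_{n_1,s_1}$, $v^r\in K_{n_2,s_2}$, $\|u^r\|_2=\|v^r\|_2=1$, $\|\sigma\|_2\le\Gamma$. *)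

theory Defs
  imports "HOL-Analysis.Analysis"
begin

text \<open>Matrices in R^{n1 x n2} are represented as functions nat => nat => real that
vanish outside the index box {..<n1} x {..<n2}; vectors in R^n as functions nat => real
vanishing outside {..<n}.\<close>

definition mat_space :: "nat \<Rightarrow> nat \<Rightarrow> (nat \<Rightarrow> nat \<Rightarrow> real) set" where
  "mat_space n1 n2 = {Z. \<forall>i j. (i \<ge> n1 \<or> j \<ge> n2) \<longrightarrow> Z i j = 0}"

definition frob_dist :: "nat \<Rightarrow> nat \<Rightarrow> (nat \<Rightarrow> nat \<Rightarrow> real) \<Rightarrow> (nat \<Rightarrow> nat \<Rightarrow> real) \<Rightarrow> real" where
  "frob_dist n1 n2 Z W = sqrt (\<Sum>i<n1. \<Sum>j<n2. (Z i j - W i j)\<^sup>2)"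

definition covering_number ::
  "nat \<Rightarrow> nat \<Rightarrow> (nat \<Rightarrow> nat \<Rightarrow> real) set \<Rightarrow> real \<Rightarrow> nat" where
  "covering_number n1 n2 M eps = Inf {card C | C. finite C \<and> C \<subseteq> mat_space n1 n2 \<and>
      (\<forall>Z\<in>M. \<exists>W\<in>C. frob_dist n1 n2 Z W \<le> eps)}"

definition vnorm2 :: "nat \<Rightarrow> (nat \<Rightarrow> real) \<Rightarrow> real" where
  "vnorm2 n u = sqrt (\<Sum>i<n. (u i)\<^sup>2)"

definition vnorm1 :: "nat \<Rightarrow> (nat \<Rightarrow> real) \<Rightarrow> real" where
  "vnorm1 n u = (\<Sum>i<n. \<bar>u i\<bar>)"

definition vspace :: "nat \<Rightarrow> (nat \<Rightarrow> real) set" where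
  "vspace n = {u. \<forall>i\<ge>n. u i = 0}"

definition supp :: "(nat \<Rightarrow> real) \<Rightarrow> nat set" where
  "supp u = {i. u i \<noteq> 0}"

definition K_set :: "nat \<Rightarrow> nat \<Rightarrow> (nat \<Rightarrow> real) set" where
  "K_set n s = {z \<in> vspace n. vnorm2 n z \<le> 1 \<and> vnorm1 n z \<le> sqrt (real s)}"

definition rank_sum :: "nat \<Rightarrow> (nat \<Rightarrow> real) \<Rightarrow> (nat \<Rightarrow> nat \<Rightarrow> real) \<Rightarrow> (nat \<Rightarrow> nat \<Rightarrow> real)
    \<Rightarrow> (nat \<Rightarrow> nat \<Rightarrow> real)" where
  "rank_sum R \<sigma> u v = (\<lambda>i j. \<Sum>r<R. \<sigma> r * u r i * v r j)"

definition S_set :: "nat \<Rightarrow> nat \<Rightarrow> nat \<Rightarrow> nat \<Rightarrow> nat \<Rightarrow> real \<Rightarrow> (nat \<Rightarrow> nat \<Rightarrow> real) set" where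
  "S_set n1 n2 s1 s2 R \<Gamma> = {rank_sum R \<sigma> u v | \<sigma> u v.
     (\<forall>r<R. u r \<in> vspace n1 \<and> v r \<in> vspace n2 \<and>
        card (supp (u r)) \<le> s1 \<and> card (supp (v r)) \<le> s2 \<and>
        vnorm2 n1 (u r) = 1 \<and> vnorm2 n2 (v r) = 1) \<and> vnorm2 R \<sigma> \<le> \<Gamma>}"

definition KR_set :: "nat \<Rightarrow> nat \<Rightarrow> nat \<Rightarrow> nat \<Rightarrow> nat \<Rightarrow> real \<Rightarrow> (nat \<Rightarrow> nat \<Rightarrow> real) set" where
  "KR_set n1 n2 s1 s2 R \<Gamma> = {rank_sum R \<sigma> u v | \<sigma> u v.
     (\<forall>r<R. u r \<in> K_set n1 s1 \<and> v r \<in> K_set n2 s2 \<and>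
        vnorm2 n1 (u r) = 1 \<and> vnorm2 n2 (v r) = 1) \<and> vnorm2 R \<sigma> \<le> \<Gamma>}"

end

theory Submission
  imports Defs
begin


lemma vnorm2_L2: "vnorm2 n u = L2_set u {..<n}"
  by (simp add: vnorm2_def L2_set_def)

lemma vnorm2_nonneg: "0 \<le> vnorm2 n u"
  by (simp add: vnorm2_L2)

lemma vnorm2_scale: "vnorm2 n (\<lambda>i. c * u i) = \<bar>c\<bar> * vnorm2 n u"
proof -
  have "(\<Sum>i<n. (c * u i)\<^sup>2) = c\<^sup>2 * (\<Sum>i<n. (u i)\<^sup>2)"
    by (simp add: power_mult_distrib sum_distrib_left)
  then show ?thesis by (simp add: vnorm2_def real_sqrt_mult)
qed

lemma vnorm2_coord: "i < n \<Longrightarrow> \<bar>u i\<bar> \<le> vnorm2 n u"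
proof -
  assume "i < n"
  have "(u i)\<^sup>2 \<le> (\<Sum>j<n. (u j)\<^sup>2)"
    using \<open>i<n\<close> by (intro member_le_sum) auto
  then show ?thesis unfolding vnorm2_def using real_sqrt_le_mono by fastforce
qed

lemma vnorm2_abs_mono:
  assumes "\<And>i. i < n \<Longrightarrow> \<bar>f i\<bar> \<le> \<bar>g i\<bar>"
  shows "vnorm2 n f \<le> vnorm2 n g"
proof -
  have "(\<Sum>i<n. (f i)\<^sup>2) \<le> (\<Sum>i<n. (g i)\<^sup>2)"
    using assms by (intro sum_mono) (simp add: abs_le_square_iff)
  then show ?thesis unfolding vnorm2_def by simp
qed

lemma vnorm2_triangle: "vnorm2 n (\<lambda>i. f i + g i) \<le> vnorm2 n f + vnorm2 n g"
  unfolding vnorm2_L2 by (rule L2_set_triangle_ineq)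

lemma sum_abs_le_vnorm2: "(\<Sum>i<n. \<bar>f i\<bar>) \<le> sqrt n * vnorm2 n f"
proof -
  have "(\<Sum>i<n. \<bar>f i\<bar> * \<bar>1\<bar>) \<le> L2_set f {..<n} * L2_set (\<lambda>_. 1::real) {..<n}"
    by (rule L2_set_mult_ineq)
  then show ?thesis by (simp add: vnorm2_L2 L2_set_constant mult.commute)
qed

lemma vspace_supp_sub: "u \<in> vspace n \<Longrightarrow> supp u \<subseteq> {..<n}"
  by (auto simp: vspace_def supp_def not_less[symmetric])

lemma vspace_supp_card: "u \<in> vspace n \<Longrightarrow> card (supp u) \<le> n"
  using card_mono[OF _ vspace_supp_sub] by fastforce

lemma sum_supp: "u \<in> vspace n \<Longrightarrow> (\<Sum>i<n. f (u i)) = (\<Sum>i\<in>supp u. f (u i))" if "f 0 = 0"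
proof -
  assume u: "u \<in> vspace n"
  show ?thesis
    by (rule sum.mono_neutral_right) (use u vspace_supp_sub[OF u] that in \<open>auto simp: supp_def\<close>)
qed



lemma card_subsets_le:
  assumes "finite X"
  shows "card {A. A \<subseteq> X \<and> card A \<le> k} \<le> (card X + 1) ^ k"
proof -
  let ?L = "{xs. set xs \<subseteq> insert None (Some ` X) \<and> length xs = k}"
  let ?f = "\<lambda>xs. {x. Some x \<in> set xs}"
  have sub: "{A. A \<subseteq> X \<and> card A \<le> k} \<subseteq> ?f ` ?L"
  proof
    fix A assume "A \<in> {A. A \<subseteq> X \<and> card A \<le> k}"
    then have AX: "A \<subseteq> X" and cA: "card A \<le> k" by auto
    have "finite A" using AX assms finite_subset by blast
    then obtain xs where xs: "set xs = A" "distinct xs" using finite_distinct_list by blast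
    have lx: "length xs = card A" using xs distinct_card by fastforce
    define ys where "ys = map Some xs @ replicate (k - length xs) None"
    have "ys \<in> ?L" using xs AX lx cA by (auto simp: ys_def)
    moreover have "?f ys = A" using xs by (auto simp: ys_def)
    ultimately show "A \<in> ?f ` ?L" by blast
  qed
  have fin: "finite ?L"
    using finite_lists_length_eq[of "insert None (Some ` X)" k] assms by auto
  have "card {A. A \<subseteq> X \<and> card A \<le> k} \<le> card (?f ` ?L)"
    by (rule card_mono[OF finite_imageI[OF fin] sub])
  also have "\<dots> \<le> card ?L" by (rule card_image_le[OF fin])
  also have "\<dots> = card (insert None (Some ` X)) ^ k"
    using card_lists_length_eq[of "insert None (Some ` X)" k] assms by simp
  also have "card (insert None (Some ` X)) = card X + 1"
    using assms by (simp add: card_image)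
  finally show ?thesis .
qed

definition gv :: "real \<Rightarrow> real set" where
  "gv h = (\<lambda>j. h * of_int j) ` {-\<lfloor>1/h\<rfloor>..\<lfloor>1/h\<rfloor>}"

definition grid_set :: "nat \<Rightarrow> nat \<Rightarrow> real \<Rightarrow> (nat \<Rightarrow> real) set" where
  "grid_set n k h = {w. w \<in> vspace n \<and> card (supp w) \<le> k \<and> (\<forall>i. w i \<in> gv h)}"

definition rnd :: "real \<Rightarrow> real \<Rightarrow> real" where
  "rnd h a = h * of_int (if a \<ge> 0 then \<lfloor>a/h\<rfloor> else - \<lfloor>-a/h\<rfloor>)"

lemma finite_gv: "finite (gv h)" by (simp add: gv_def)

lemma card_gv: assumes "h > 0" shows "real (card (gv h)) \<le> 2/h + 1"
proof -
  have "card (gv h) \<le> card {-\<lfloor>1/h\<rfloor>..\<lfloor>1/h\<rfloor>}" unfolding gv_def by (rule card_image_le) simp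
  also have "\<dots> = nat (2*\<lfloor>1/h\<rfloor> + 1)" by simp
  finally have "real (card (gv h)) \<le> real (nat (2*\<lfloor>1/h\<rfloor> + 1))" by simp
  also have "\<dots> \<le> 2/h + 1"
  proof -
    have "\<lfloor>1/h\<rfloor> \<ge> 0" using assms by simp
    then have "real (nat (2*\<lfloor>1/h\<rfloor> + 1)) = 2 * of_int \<lfloor>1/h\<rfloor> + 1" by simp
    also have "\<dots> \<le> 2/h + 1"
    proof -
      have "real_of_int \<lfloor>1/h\<rfloor> \<le> 1/h" by (rule of_int_floor_le)
      moreover have "2/h = 2*(1/h)" by simp
      ultimately show ?thesis by linarith
    qed
    finally show ?thesis .
  qed
  finally show ?thesis .
qed

lemma rnd_props:
  assumes h: "h > 0" and a: "\<bar>a\<bar> \<le> 1"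
  shows "\<bar>rnd h a\<bar> \<le> \<bar>a\<bar>" "\<bar>a - rnd h a\<bar> \<le> h" "rnd h a \<in> gv h" "a = 0 \<Longrightarrow> rnd h a = 0"
proof -
  have fl: "\<And>b. 0 \<le> b \<Longrightarrow> h * of_int \<lfloor>b/h\<rfloor> \<le> b \<and> b - h * of_int \<lfloor>b/h\<rfloor> \<le> h \<and> 0 \<le> h * of_int \<lfloor>b/h\<rfloor>"
  proof -
    fix b :: real assume b: "0 \<le> b"
    have 1: "of_int \<lfloor>b/h\<rfloor> \<le> b/h" by (rule of_int_floor_le)
    have 2: "b/h < of_int \<lfloor>b/h\<rfloor> + 1" by (rule real_of_int_floor_add_one_gt)
    have 3: "0 \<le> \<lfloor>b/h\<rfloor>" using b h by simp
    from 1 h have "h * of_int \<lfloor>b/h\<rfloor> \<le> h * (b/h)" by (intro mult_left_mono) auto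
    moreover from 2 h have "h * (b/h) < h * (of_int \<lfloor>b/h\<rfloor> + 1)" by (intro mult_strict_left_mono) auto
    ultimately show "h * of_int \<lfloor>b/h\<rfloor> \<le> b \<and> b - h * of_int \<lfloor>b/h\<rfloor> \<le> h \<and> 0 \<le> h * of_int \<lfloor>b/h\<rfloor>"
      using h 3 by (simp add: algebra_simps)
  qed
  have "\<bar>rnd h a\<bar> \<le> \<bar>a\<bar> \<and> \<bar>a - rnd h a\<bar> \<le> h"
  proof (cases "a \<ge> 0")
    case True
    then have e: "rnd h a = h * of_int \<lfloor>a/h\<rfloor>" by (simp add: rnd_def)
    show ?thesis unfolding e using fl[OF True] True by linarith
  next
    case False
    then have e: "rnd h a = - (h * of_int \<lfloor>(-a)/h\<rfloor>)" by (simp add: rnd_def)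
    have "0 \<le> -a" using False by simp
    show ?thesis unfolding e using fl[OF \<open>0 \<le> -a\<close>] False by linarith
  qed
  then show "\<bar>rnd h a\<bar> \<le> \<bar>a\<bar>" "\<bar>a - rnd h a\<bar> \<le> h" by auto
  show "a = 0 \<Longrightarrow> rnd h a = 0" by (simp add: rnd_def)
  have mono: "\<And>b. 0 \<le> b \<Longrightarrow> b \<le> 1 \<Longrightarrow> \<lfloor>b/h\<rfloor> \<le> \<lfloor>1/h\<rfloor> \<and> 0 \<le> \<lfloor>b/h\<rfloor>"
    using h by (auto intro!: floor_mono divide_right_mono)
  show "rnd h a \<in> gv h"
  proof (cases "a \<ge> 0")
    case True
    have m: "\<lfloor>a/h\<rfloor> \<le> \<lfloor>1/h\<rfloor>" "0 \<le> \<lfloor>a/h\<rfloor>" using mono[of a] a True by auto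
    have mem: "\<lfloor>a/h\<rfloor> \<in> {-\<lfloor>1/h\<rfloor>..\<lfloor>1/h\<rfloor>}" unfolding atLeastAtMost_iff using m by linarith
    have e: "rnd h a = h * of_int \<lfloor>a/h\<rfloor>" using True by (simp add: rnd_def)
    show ?thesis unfolding e gv_def
      by (rule image_eqI[OF _ mem]) simp
  next
    case False
    have m: "\<lfloor>(-a)/h\<rfloor> \<le> \<lfloor>1/h\<rfloor>" "0 \<le> \<lfloor>(-a)/h\<rfloor>" using mono[of "-a"] a False by auto
    have mem: "\<lfloor>(-a)/h\<rfloor> \<in> {-\<lfloor>1/h\<rfloor>..\<lfloor>1/h\<rfloor>}" unfolding atLeastAtMost_iff using m by linarith
    have mem2: "- \<lfloor>(-a)/h\<rfloor> \<in> {-\<lfloor>1/h\<rfloor>..\<lfloor>1/h\<rfloor>}" unfolding atLeastAtMost_iff using m by linarith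
    have e: "rnd h a = h * of_int (- \<lfloor>(-a)/h\<rfloor>)" using False by (simp add: rnd_def)
    show ?thesis unfolding e gv_def
      by (rule image_eqI[OF _ mem2]) simp
  qed
qed

lemma grid_set_finite_card:
  assumes h: "h > 0"
  shows "finite (grid_set n k h) \<and> card (grid_set n k h) \<le> (n * card (gv h) + 1) ^ k"
proof -
  define X where "X = {..<n} \<times> gv h"
  define g where "g = (\<lambda>w::nat\<Rightarrow>real. (\<lambda>i. (i, w i)) ` supp w)"
  have finX: "finite X" by (simp add: finite_gv X_def)
  have gmem: "(i, b) \<in> g w \<longleftrightarrow> b = w i \<and> w i \<noteq> 0" for i b w
    by (auto simp: g_def supp_def)
  have inj: "inj_on g (grid_set n k h)"
  proof (rule inj_onI)
    fix w w' assume eq: "g w = g w'"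
    show "w = w'"
    proof (rule ext)
      fix i
      show "w i = w' i"
        using gmem[of i "w i" w] gmem[of i "w' i" w'] gmem[of i "w i" w'] gmem[of i "w' i" w] eq
        by metis
    qed
  qed
  have img: "g ` grid_set n k h \<subseteq> {A. A \<subseteq> X \<and> card A \<le> k}"
  proof
    fix A assume "A \<in> g ` grid_set n k h"
    then obtain w where w: "w \<in> grid_set n k h" and A: "A = g w" by blast
    have wv: "w \<in> vspace n" and wc: "card (supp w) \<le> k" and wg: "\<And>i. w i \<in> gv h"
      using w by (auto simp: grid_set_def)
    have ss: "supp w \<subseteq> {..<n}" by (rule vspace_supp_sub[OF wv])
    have "A \<subseteq> X"
    proof
      fix p assume "p \<in> A"
      then obtain i where i: "i \<in> supp w" "p = (i, w i)" unfolding A g_def by blast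
      show "p \<in> X" using i ss wg unfolding X_def by auto
    qed
    moreover have "card A \<le> card (supp w)" unfolding A g_def
      by (rule card_image_le) (use ss finite_subset in blast)
    ultimately show "A \<in> {A. A \<subseteq> X \<and> card A \<le> k}" using wc by simp
  qed
  have finT: "finite {A. A \<subseteq> X \<and> card A \<le> k}"
  proof (rule finite_subset[of _ "Pow X"])
    show "{A. A \<subseteq> X \<and> card A \<le> k} \<subseteq> Pow X" by blast
  qed (simp add: finX)
  have fin: "finite (grid_set n k h)"
    using finite_imageD[OF finite_subset[OF img finT] inj] .
  have "card (grid_set n k h) = card (g ` grid_set n k h)" using card_image[OF inj] by simp
  also have "\<dots> \<le> card {A. A \<subseteq> X \<and> card A \<le> k}" by (rule card_mono[OF finT img])
  also have "\<dots> \<le> (card X + 1) ^ k" by (rule card_subsets_le[OF finX])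
  also have "card X = n * card (gv h)" by (simp add: card_cartesian_product X_def)
  finally show ?thesis using fin by simp
qed

lemma grid_card_real:
  assumes h: "0 < h" "h \<le> 1" and n: "1 \<le> n"
  shows "real (card (grid_set n k h)) \<le> (4 * real n / h) ^ k"
proof -
  have "real (card (grid_set n k h)) \<le> real ((n * card (gv h) + 1) ^ k)"
    using grid_set_finite_card[OF h(1)] by (simp only: of_nat_le_iff)
  also have "\<dots> = (real n * real (card (gv h)) + 1) ^ k" by (simp add: add.commute)
  also have "\<dots> \<le> (4 * real n / h) ^ k"
  proof (rule power_mono)
    have "real n * real (card (gv h)) \<le> real n * (2/h + 1)"
      using card_gv[OF h(1)] by (intro mult_left_mono) auto
    moreover have "real n * (2/h+1) + 1 \<le> 4 * real n / h"
    proof -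
      have a: "real n * h \<le> real n" using mult_left_mono[of h 1 "real n"] h by simp
      have b: "h \<le> real n" using h n by simp
      have "real n * (2/h+1) + 1 = (2*n + n*h + h)/h" using h by (simp add: field_simps)
      also have "\<dots> \<le> (4*n)/h" using a b h by (intro divide_right_mono) linarith+
      finally show ?thesis by simp
    qed
    ultimately show "real n * real (card (gv h)) + 1 \<le> 4 * real n / h" by linarith
  qed simp
  finally show ?thesis .
qed

lemma grid_approx:
  assumes h: "h > 0" and u: "u \<in> vspace n" "vnorm2 n u \<le> 1" "card (supp u) \<le> k"
  defines "w \<equiv> (\<lambda>i. rnd h (u i))"
  shows "w \<in> grid_set n k h" "vnorm2 n w \<le> 1" "vnorm2 n (\<lambda>i. u i - w i) \<le> h * sqrt k"
proof -
  have ab: "\<bar>u i\<bar> \<le> 1" for i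
  proof (cases "i < n")
    case True then show ?thesis using vnorm2_coord[OF True, of u] u by simp
  next
    case False then show ?thesis using u by (simp add: vspace_def)
  qed
  have w0: "u i = 0 \<Longrightarrow> w i = 0" for i using rnd_props(4)[OF h ab] by (simp add: w_def)
  have suppw: "supp w \<subseteq> supp u" using w0 by (auto simp: supp_def)
  have fins: "finite (supp u)" using vspace_supp_sub[OF u(1)] finite_subset by blast
  have "w \<in> vspace n" using u(1) w0 by (auto simp: vspace_def)
  moreover have "card (supp w) \<le> k" using card_mono[OF fins suppw] u(3) by simp
  moreover have "\<forall>i. w i \<in> gv h" using rnd_props(3)[OF h ab] by (simp add: w_def)
  ultimately show "w \<in> grid_set n k h" by (simp add: grid_set_def)
  have "vnorm2 n w \<le> vnorm2 n u" by (rule vnorm2_abs_mono) (use rnd_props(1)[OF h ab] in \<open>simp add: w_def\<close>)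
  then show "vnorm2 n w \<le> 1" using u by simp
  have "(\<Sum>i<n. (u i - w i)\<^sup>2) = (\<Sum>i\<in>supp u. (u i - w i)\<^sup>2)"
    by (rule sum.mono_neutral_right) (use vspace_supp_sub[OF u(1)] w0 in \<open>auto simp: supp_def\<close>)
  also have "\<dots> \<le> (\<Sum>i\<in>supp u. h\<^sup>2)"
  proof (rule sum_mono)
    fix i show "(u i - w i)\<^sup>2 \<le> h\<^sup>2"
      using rnd_props(2)[OF h ab, of i] h by (simp add: w_def abs_le_square_iff[symmetric])
  qed
  also have "\<dots> = real (card (supp u)) * h\<^sup>2" by simp
  also have "\<dots> \<le> real k * h\<^sup>2" using u(3) by (intro mult_right_mono) auto
  finally have "sqrt (\<Sum>i<n. (u i - w i)\<^sup>2) \<le> sqrt (real k * h\<^sup>2)" by simp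
  also have "\<dots> = h * sqrt k" using h by (simp add: real_sqrt_mult)
  finally show "vnorm2 n (\<lambda>i. u i - w i) \<le> h * sqrt k" by (simp add: vnorm2_def)
qed



definition fnorm :: "nat \<Rightarrow> nat \<Rightarrow> (nat \<Rightarrow> nat \<Rightarrow> real) \<Rightarrow> real" where
  "fnorm n1 n2 Z = sqrt (\<Sum>i<n1. \<Sum>j<n2. (Z i j)\<^sup>2)"

lemma fnorm_L2: "fnorm n1 n2 Z = L2_set (\<lambda>p. Z (fst p) (snd p)) ({..<n1} \<times> {..<n2})"
  unfolding fnorm_def L2_set_def by (simp add: sum.cartesian_product case_prod_beta)

lemma frob_fnorm: "frob_dist n1 n2 Z W = fnorm n1 n2 (\<lambda>i j. Z i j - W i j)"
  by (simp add: frob_dist_def fnorm_def)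

lemma fnorm_triangle: "fnorm n1 n2 (\<lambda>i j. Z i j + W i j) \<le> fnorm n1 n2 Z + fnorm n1 n2 W"
  unfolding fnorm_L2 by (rule L2_set_triangle_ineq)

lemma fnorm_sum:
  assumes "finite A"
  shows "fnorm n1 n2 (\<lambda>i j. \<Sum>r\<in>A. T r i j) \<le> (\<Sum>r\<in>A. fnorm n1 n2 (T r))"
  using assms
proof (induction A rule: finite_induct)
  case empty
  then show ?case by (simp add: fnorm_def)
next
  case (insert x F)
  have "fnorm n1 n2 (\<lambda>i j. \<Sum>r\<in>insert x F. T r i j) = fnorm n1 n2 (\<lambda>i j. T x i j + (\<Sum>r\<in>F. T r i j))"
    using insert by simp
  also have "\<dots> \<le> fnorm n1 n2 (T x) + fnorm n1 n2 (\<lambda>i j. \<Sum>r\<in>F. T r i j)"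
    by (rule fnorm_triangle)
  also have "\<dots> \<le> fnorm n1 n2 (T x) + (\<Sum>r\<in>F. fnorm n1 n2 (T r))" using insert by simp
  finally show ?case using insert by simp
qed

lemma fnorm_rank1: "fnorm n1 n2 (\<lambda>i j. c * a i * b j) = \<bar>c\<bar> * vnorm2 n1 a * vnorm2 n2 b"
proof -
  have "(\<Sum>i<n1. (a i)\<^sup>2) * (\<Sum>j<n2. (b j)\<^sup>2) = (\<Sum>i<n1. \<Sum>j<n2. (a i)\<^sup>2 * (b j)\<^sup>2)"
    by (rule sum_product)
  moreover have "(\<Sum>i<n1. \<Sum>j<n2. (c * a i * b j)\<^sup>2) = c\<^sup>2 * (\<Sum>i<n1. \<Sum>j<n2. (a i)\<^sup>2 * (b j)\<^sup>2)"
    by (simp add: power_mult_distrib sum_distrib_left mult_ac)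
  ultimately have "(\<Sum>i<n1. \<Sum>j<n2. (c * a i * b j)\<^sup>2) = c\<^sup>2 * ((\<Sum>i<n1. (a i)\<^sup>2) * (\<Sum>j<n2. (b j)\<^sup>2))"
    by simp
  then show ?thesis by (simp add: fnorm_def vnorm2_def real_sqrt_mult)
qed

lemma rank_dist:
  assumes uv: "\<And>r. r < R \<Longrightarrow> vnorm2 n1 (u r) \<le> 1 \<and> vnorm2 n2 (v r) \<le> 1 \<and> vnorm2 n1 (u' r) \<le> 1
      \<and> vnorm2 n1 (\<lambda>i. u r i - u' r i) \<le> aU \<and> vnorm2 n2 (\<lambda>j. v r j - v' r j) \<le> aV"
    and sg: "vnorm2 R \<sigma>' \<le> \<Gamma>" and a: "0 \<le> aU" "0 \<le> aV"
  shows "frob_dist n1 n2 (rank_sum R \<sigma> u v) (rank_sum R \<sigma>' u' v')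
     \<le> sqrt R * vnorm2 R (\<lambda>r. \<sigma> r - \<sigma>' r) + sqrt R * \<Gamma> * (aU + aV)"
proof -
  define T1 where "T1 r = (\<lambda>i j. (\<sigma> r - \<sigma>' r) * u r i * v r j)" for r
  define T2 where "T2 r = (\<lambda>i j. \<sigma>' r * (u r i - u' r i) * v r j)" for r
  define T3 where "T3 r = (\<lambda>i j. \<sigma>' r * u' r i * (v r j - v' r j))" for r
  have eq: "(\<lambda>i j. rank_sum R \<sigma> u v i j - rank_sum R \<sigma>' u' v' i j) =
     (\<lambda>i j. \<Sum>r<R. (\<lambda>i j. T1 r i j + T2 r i j + T3 r i j) i j)"
    by (intro ext) (simp add: rank_sum_def T1_def T2_def T3_def sum_subtractf[symmetric] algebra_simps)
  have bnd: "fnorm n1 n2 (\<lambda>i j. T1 r i j + T2 r i j + T3 r i j) \<le> \<bar>\<sigma> r - \<sigma>' r\<bar> + \<bar>\<sigma>' r\<bar> * (aU + aV)"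
    if r: "r < R" for r
  proof -
    note h = uv[OF r]
    have "fnorm n1 n2 (\<lambda>i j. T1 r i j + T2 r i j + T3 r i j) \<le>
      fnorm n1 n2 (\<lambda>i j. T1 r i j + T2 r i j) + fnorm n1 n2 (T3 r)" by (rule fnorm_triangle)
    also have "\<dots> \<le> fnorm n1 n2 (T1 r) + fnorm n1 n2 (T2 r) + fnorm n1 n2 (T3 r)"
      using fnorm_triangle[of n1 n2 "T1 r" "T2 r"] by simp
    also have "fnorm n1 n2 (T1 r) \<le> \<bar>\<sigma> r - \<sigma>' r\<bar>"
    proof -
      have "fnorm n1 n2 (T1 r) = \<bar>\<sigma> r - \<sigma>' r\<bar> * vnorm2 n1 (u r) * vnorm2 n2 (v r)"
        unfolding T1_def by (rule fnorm_rank1)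
      also have "\<dots> \<le> \<bar>\<sigma> r - \<sigma>' r\<bar> * 1 * 1"
        using h by (intro mult_mono) (auto simp: vnorm2_nonneg)
      finally show ?thesis by simp
    qed
    also have "fnorm n1 n2 (T2 r) \<le> \<bar>\<sigma>' r\<bar> * aU"
    proof -
      have "fnorm n1 n2 (T2 r) = \<bar>\<sigma>' r\<bar> * vnorm2 n1 (\<lambda>i. u r i - u' r i) * vnorm2 n2 (v r)"
        unfolding T2_def by (rule fnorm_rank1)
      also have "\<dots> \<le> \<bar>\<sigma>' r\<bar> * aU * 1"
        using h a by (intro mult_mono) (auto simp: vnorm2_nonneg)
      finally show ?thesis by simp
    qed
    also have "fnorm n1 n2 (T3 r) \<le> \<bar>\<sigma>' r\<bar> * aV"
    proof -
      have "fnorm n1 n2 (T3 r) = \<bar>\<sigma>' r\<bar> * vnorm2 n1 (u' r) * vnorm2 n2 (\<lambda>j. v r j - v' r j)"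
        unfolding T3_def by (rule fnorm_rank1)
      also have "\<dots> \<le> \<bar>\<sigma>' r\<bar> * 1 * aV"
        using h a by (intro mult_mono) (auto simp: vnorm2_nonneg)
      finally show ?thesis by simp
    qed
    finally show ?thesis by (simp add: algebra_simps)
  qed
  have "frob_dist n1 n2 (rank_sum R \<sigma> u v) (rank_sum R \<sigma>' u' v')
     = fnorm n1 n2 (\<lambda>i j. \<Sum>r<R. (\<lambda>i j. T1 r i j + T2 r i j + T3 r i j) i j)"
    unfolding frob_fnorm eq ..
  also have "\<dots> \<le> (\<Sum>r<R. fnorm n1 n2 (\<lambda>i j. T1 r i j + T2 r i j + T3 r i j))"
    by (rule fnorm_sum) simp
  also have "\<dots> \<le> (\<Sum>r<R. \<bar>\<sigma> r - \<sigma>' r\<bar> + \<bar>\<sigma>' r\<bar> * (aU + aV))"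
    by (rule sum_mono) (rule bnd, simp)
  also have "\<dots> = (\<Sum>r<R. \<bar>\<sigma> r - \<sigma>' r\<bar>) + (\<Sum>r<R. \<bar>\<sigma>' r\<bar>) * (aU + aV)"
    by (simp add: sum.distrib sum_distrib_right)
  also have "\<dots> \<le> sqrt R * vnorm2 R (\<lambda>r. \<sigma> r - \<sigma>' r) + (sqrt R * \<Gamma>) * (aU + aV)"
  proof (rule add_mono)
    show "(\<Sum>r<R. \<bar>\<sigma> r - \<sigma>' r\<bar>) \<le> sqrt R * vnorm2 R (\<lambda>r. \<sigma> r - \<sigma>' r)"
      by (rule sum_abs_le_vnorm2)
    have "(\<Sum>r<R. \<bar>\<sigma>' r\<bar>) \<le> sqrt R * vnorm2 R \<sigma>'" by (rule sum_abs_le_vnorm2)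
    also have "\<dots> \<le> sqrt R * \<Gamma>" using sg by (intro mult_left_mono) auto
    finally show "(\<Sum>r<R. \<bar>\<sigma>' r\<bar>) * (aU + aV) \<le> (sqrt R * \<Gamma>) * (aU + aV)"
      using a by (intro mult_right_mono) auto
  qed
  finally show ?thesis by (simp add: mult.assoc)
qed

lemma rank_sum_mat_space:
  assumes "\<And>r. r < R \<Longrightarrow> u r \<in> vspace n1 \<and> v r \<in> vspace n2"
  shows "rank_sum R \<sigma> u v \<in> mat_space n1 n2"
  unfolding mat_space_def rank_sum_def
proof (intro CollectI allI impI)
  fix i j assume "n1 \<le> i \<or> n2 \<le> j"
  then have "\<forall>r\<in>{..<R}. \<sigma> r * u r i * v r j = 0" using assms by (auto simp: vspace_def)
  then show "(\<Sum>r<R. \<sigma> r * u r i * v r j) = 0" by (intro sum.neutral) blast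
qed

lemma generic_cover:
  assumes fin: "finite NS" "finite NU" "finite NV"
    and NU: "\<And>w. w \<in> NU \<Longrightarrow> w \<in> vspace n1 \<and> vnorm2 n1 w \<le> 1"
    and NV: "\<And>w. w \<in> NV \<Longrightarrow> w \<in> vspace n2 \<and> vnorm2 n2 w \<le> 1"
    and NS: "\<And>s. s \<in> NS \<Longrightarrow> vnorm2 R s \<le> \<Gamma>"
    and apS: "\<And>\<sigma>. vnorm2 R \<sigma> \<le> \<Gamma> \<Longrightarrow> \<exists>s\<in>NS. vnorm2 R (\<lambda>r. \<sigma> r - s r) \<le> aS"
    and apU: "\<And>u. u \<in> U \<Longrightarrow> vnorm2 n1 u \<le> 1 \<and> (\<exists>w\<in>NU. vnorm2 n1 (\<lambda>i. u i - w i) \<le> aU)"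
    and apV: "\<And>v. v \<in> V \<Longrightarrow> vnorm2 n2 v \<le> 1 \<and> (\<exists>w\<in>NV. vnorm2 n2 (\<lambda>i. v i - w i) \<le> aV)"
    and a: "0 \<le> aU" "0 \<le> aV"
    and M: "M \<subseteq> {rank_sum R \<sigma> u v | \<sigma> u v. vnorm2 R \<sigma> \<le> \<Gamma> \<and> (\<forall>r<R. u r \<in> U \<and> v r \<in> V)}"
  shows "\<exists>C. finite C \<and> C \<subseteq> mat_space n1 n2 \<and> card C \<le> card NS * card NU ^ R * card NV ^ R \<and>
     (\<forall>Z\<in>M. \<exists>W\<in>C. frob_dist n1 n2 Z W \<le> sqrt R * aS + sqrt R * \<Gamma> * (aU + aV))"
proof -
  define P where "P = NS \<times> (PiE {..<R} (\<lambda>_. NU)) \<times> (PiE {..<R} (\<lambda>_. NV))"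
  define F where "F = (\<lambda>(s, u, v). rank_sum R s u v)"
  define C where "C = F ` P"
  have finP: "finite P" unfolding P_def using fin by (simp add: finite_PiE)
  have "card C \<le> card P" unfolding C_def by (rule card_image_le[OF finP])
  also have "card P = card NS * card NU ^ R * card NV ^ R"
    unfolding P_def by (simp add: card_cartesian_product card_PiE)
  finally have cC: "card C \<le> card NS * card NU ^ R * card NV ^ R" .
  have CM: "C \<subseteq> mat_space n1 n2"
  proof
    fix Z assume "Z \<in> C"
    then obtain s u v where "(s, u, v) \<in> P" "Z = rank_sum R s u v" unfolding C_def F_def by auto
    then show "Z \<in> mat_space n1 n2" unfolding P_def
      by (auto intro!: rank_sum_mat_space dest: NU NV)
  qed
  have cov: "\<exists>W\<in>C. frob_dist n1 n2 Z W \<le> sqrt R * aS + sqrt R * \<Gamma> * (aU + aV)" if zM: "Z \<in> M" for Z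
  proof -
    obtain \<sigma> u v where Z: "Z = rank_sum R \<sigma> u v" and sg: "vnorm2 R \<sigma> \<le> \<Gamma>"
      and uv: "\<And>r. r < R \<Longrightarrow> u r \<in> U \<and> v r \<in> V"
    proof -
      have "Z \<in> {rank_sum R \<sigma> u v | \<sigma> u v. vnorm2 R \<sigma> \<le> \<Gamma> \<and> (\<forall>r<R. u r \<in> U \<and> v r \<in> V)}"
        using M zM by blast
      then have "\<exists>\<sigma> u v. Z = rank_sum R \<sigma> u v \<and> vnorm2 R \<sigma> \<le> \<Gamma> \<and> (\<forall>r<R. u r \<in> U \<and> v r \<in> V)"
        by blast
      then show ?thesis using that by blast
    qed
    obtain s where s: "s \<in> NS" "vnorm2 R (\<lambda>r. \<sigma> r - s r) \<le> aS" using apS[OF sg] by blast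
    define u' where "u' = (\<lambda>r. if r < R then (SOME w. w \<in> NU \<and> vnorm2 n1 (\<lambda>i. u r i - w i) \<le> aU) else undefined)"
    define v' where "v' = (\<lambda>r. if r < R then (SOME w. w \<in> NV \<and> vnorm2 n2 (\<lambda>i. v r i - w i) \<le> aV) else undefined)"
    have u': "u' r \<in> NU \<and> vnorm2 n1 (\<lambda>i. u r i - u' r i) \<le> aU" if "r < R" for r
    proof -
      have "\<exists>w. w \<in> NU \<and> vnorm2 n1 (\<lambda>i. u r i - w i) \<le> aU" using apU uv[OF that] by blast
      from someI_ex[OF this] show ?thesis unfolding u'_def using that by simp
    qed
    have v': "v' r \<in> NV \<and> vnorm2 n2 (\<lambda>i. v r i - v' r i) \<le> aV" if "r < R" for r
    proof -
      have "\<exists>w. w \<in> NV \<and> vnorm2 n2 (\<lambda>i. v r i - w i) \<le> aV" using apV uv[OF that] by blast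
      from someI_ex[OF this] show ?thesis unfolding v'_def using that by simp
    qed
    have inP: "(s, u', v') \<in> P" unfolding P_def using s u' v'
      by (auto simp: PiE_def extensional_def u'_def v'_def)
    have "frob_dist n1 n2 Z (rank_sum R s u' v') \<le> sqrt R * vnorm2 R (\<lambda>r. \<sigma> r - s r) + sqrt R * \<Gamma> * (aU + aV)"
      unfolding Z
    proof (rule rank_dist[OF _ NS[OF s(1)] a])
      fix r assume r: "r < R"
      show "vnorm2 n1 (u r) \<le> 1 \<and> vnorm2 n2 (v r) \<le> 1 \<and> vnorm2 n1 (u' r) \<le> 1
      \<and> vnorm2 n1 (\<lambda>i. u r i - u' r i) \<le> aU \<and> vnorm2 n2 (\<lambda>j. v r j - v' r j) \<le> aV"
        using apU[of "u r"] apV[of "v r"] uv[OF r] u'[OF r] v'[OF r] NU[of "u' r"] by auto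
    qed
    also have "\<dots> \<le> sqrt R * aS + sqrt R * \<Gamma> * (aU + aV)"
      using s(2) by (intro add_right_mono mult_left_mono) auto
    finally show ?thesis using inP unfolding C_def F_def by force
  qed
  show ?thesis using finP cC CM cov unfolding C_def by (intro exI[of _ C]) (auto simp: C_def)
qed



lemma sigma_net:
  assumes G: "\<Gamma> > 0" and h: "0 < h" "h \<le> 1" and R: "1 \<le> R"
  shows "\<exists>NS. finite NS \<and> real (card NS) \<le> (4 * real R / h) ^ R \<and> (\<forall>s\<in>NS. vnorm2 R s \<le> \<Gamma>) \<and>
     (\<forall>\<sigma>. vnorm2 R \<sigma> \<le> \<Gamma> \<longrightarrow> (\<exists>s\<in>NS. vnorm2 R (\<lambda>r. \<sigma> r - s r) \<le> \<Gamma> * (h * sqrt R)))"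
proof -
  define G0 where "G0 = grid_set R R h \<inter> {w. vnorm2 R w \<le> 1}"
  define NS where "NS = (\<lambda>w r. \<Gamma> * w r) ` G0"
  have finG: "finite (grid_set R R h)" using grid_set_finite_card[OF h(1)] by blast
  have fin: "finite NS" unfolding NS_def G0_def using finG by simp
  have "card NS \<le> card G0" unfolding NS_def by (rule card_image_le) (simp add: G0_def finG)
  also have "card G0 \<le> card (grid_set R R h)" unfolding G0_def by (rule card_mono[OF finG]) auto
  finally have "real (card NS) \<le> real (card (grid_set R R h))" by simp
  also have "\<dots> \<le> (4 * real R / h) ^ R" by (rule grid_card_real[OF h R])
  finally have c: "real (card NS) \<le> (4 * real R / h) ^ R" .
  have n: "\<forall>s\<in>NS. vnorm2 R s \<le> \<Gamma>"
    using G by (auto simp: NS_def G0_def vnorm2_scale intro: mult_left_le)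
  have ap: "\<exists>s\<in>NS. vnorm2 R (\<lambda>r. \<sigma> r - s r) \<le> \<Gamma> * (h * sqrt R)" if sg: "vnorm2 R \<sigma> \<le> \<Gamma>" for \<sigma>
  proof -
    define t where "t = (\<lambda>r. if r < R then \<sigma> r / \<Gamma> else 0)"
    have tv: "t \<in> vspace R" by (simp add: t_def vspace_def)
    have "vnorm2 R t = vnorm2 R (\<lambda>r. (1/\<Gamma>) * \<sigma> r)" unfolding vnorm2_def t_def by simp
    also have "\<dots> = \<bar>1/\<Gamma>\<bar> * vnorm2 R \<sigma>" by (rule vnorm2_scale)
    also have "\<dots> = vnorm2 R \<sigma> / \<Gamma>" using G by simp
    also have "\<dots> \<le> 1" using sg G by simp
    finally have tn: "vnorm2 R t \<le> 1" .
    have tc: "card (supp t) \<le> R" by (rule vspace_supp_card[OF tv])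
    define w where "w = (\<lambda>i. rnd h (t i))"
    note g = grid_approx[OF h(1) tv tn tc, folded w_def]
    have wG: "w \<in> G0" using g by (simp add: G0_def)
    have "vnorm2 R (\<lambda>r. \<sigma> r - \<Gamma> * w r) = vnorm2 R (\<lambda>r. \<Gamma> * (t r - w r))"
      unfolding vnorm2_def t_def using G by (simp add: algebra_simps)
    also have "\<dots> = \<Gamma> * vnorm2 R (\<lambda>r. t r - w r)" using G by (simp add: vnorm2_scale)
    also have "\<dots> \<le> \<Gamma> * (h * sqrt R)" using g G unfolding w_def by (intro mult_left_mono) auto
    finally show ?thesis using wG unfolding NS_def by force
  qed
  show ?thesis using fin c n ap by blast
qed

lemma sparse_net:
  assumes h: "0 < h" "h \<le> 1" and n: "1 \<le> n"
  shows "\<exists>N. finite N \<and> real (card N) \<le> (4 * real n / h) ^ k \<and> (\<forall>w\<in>N. w \<in> vspace n \<and> vnorm2 n w \<le> 1) \<and>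
     (\<forall>u. u \<in> vspace n \<and> card (supp u) \<le> k \<and> vnorm2 n u \<le> 1 \<longrightarrow> (\<exists>w\<in>N. vnorm2 n (\<lambda>i. u i - w i) \<le> h * sqrt k))"
proof -
  define N where "N = grid_set n k h \<inter> {w. vnorm2 n w \<le> 1}"
  have finG: "finite (grid_set n k h)" using grid_set_finite_card[OF h(1)] by blast
  have "card N \<le> card (grid_set n k h)" unfolding N_def by (rule card_mono[OF finG]) (rule Int_lower1)
  then have "real (card N) \<le> real (card (grid_set n k h))" by simp
  also have "\<dots> \<le> (4 * real n / h) ^ k" by (rule grid_card_real[OF h n])
  finally have c: "real (card N) \<le> (4 * real n / h) ^ k" .
  have mem: "\<forall>w\<in>N. w \<in> vspace n \<and> vnorm2 n w \<le> 1" unfolding N_def grid_set_def by blast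
  have ap: "\<exists>w\<in>N. vnorm2 n (\<lambda>i. u i - w i) \<le> h * sqrt k"
    if u: "u \<in> vspace n" "card (supp u) \<le> k" "vnorm2 n u \<le> 1" for u
  proof -
    note g = grid_approx[OF h(1) u(1) u(3) u(2)]
    show ?thesis unfolding N_def using g by (intro bexI[of _ "(\<lambda>i. rnd h (u i))"]) auto
  qed
  have finN: "finite N" unfolding N_def using finG by simp
  show ?thesis using c mem ap finN by blast
qed

lemma K_net:
  assumes eta: "0 < \<eta>" "\<eta> \<le> 1" and n: "1 \<le> n" and s: "1 \<le> s" and k: "1 \<le> k"
    and kb: "n \<le> k \<or> 4 * real s \<le> real k * \<eta>\<^sup>2"
  shows "\<exists>N. finite N \<and> real (card N) \<le> (8 * real n * sqrt k / \<eta>) ^ k \<and> (\<forall>w\<in>N. w \<in> vspace n \<and> vnorm2 n w \<le> 1) \<and>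
     (\<forall>u. u \<in> vspace n \<and> vnorm2 n u \<le> 1 \<and> vnorm1 n u \<le> sqrt s \<longrightarrow> (\<exists>w\<in>N. vnorm2 n (\<lambda>i. u i - w i) \<le> \<eta>))"
proof -
  define h where "h = \<eta> / (2 * sqrt k)"
  have sk: "1 \<le> sqrt k" using k by simp
  have h1: "\<eta> \<le> 2 * sqrt k" using eta sk by linarith
  have "\<eta>/(2* sqrt k) \<le> (2* sqrt k)/(2* sqrt k)" by (rule divide_right_mono[OF h1]) (use sk in simp)
  then have h: "0 < h" "h \<le> 1" unfolding h_def using eta sk by auto
  have hk: "h * sqrt k = \<eta>/2" unfolding h_def using sk by (simp add: field_simps)
  have e4: "4 * real n / h = 8 * real n * sqrt k / \<eta>" unfolding h_def using eta sk by (simp add: field_simps)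
  obtain N where N: "finite N" "real (card N) \<le> (4 * real n / h) ^ k" "\<forall>w\<in>N. w \<in> vspace n \<and> vnorm2 n w \<le> 1"
    "\<And>u. u \<in> vspace n \<Longrightarrow> card (supp u) \<le> k \<Longrightarrow> vnorm2 n u \<le> 1 \<Longrightarrow> (\<exists>w\<in>N. vnorm2 n (\<lambda>i. u i - w i) \<le> h * sqrt k)"
    using sparse_net[OF h n, of k] by blast
  define t where "t = \<eta>\<^sup>2 / (4 * sqrt s)"
  have ss: "1 \<le> sqrt s" using s by simp
  have t: "0 < t" unfolding t_def using eta ss by simp
  have ap: "\<exists>w\<in>N. vnorm2 n (\<lambda>i. u i - w i) \<le> \<eta>"
    if u: "u \<in> vspace n" "vnorm2 n u \<le> 1" "vnorm1 n u \<le> sqrt s" for u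
  proof -
    define ut where "ut = (\<lambda>i. if t \<le> \<bar>u i\<bar> then u i else 0)"
    have utv: "ut \<in> vspace n" using u(1) t by (auto simp: ut_def vspace_def)
    have utn: "vnorm2 n ut \<le> 1"
    proof -
      have "\<And>i. \<bar>ut i\<bar> \<le> \<bar>u i\<bar>" by (simp add: ut_def)
      then have "vnorm2 n ut \<le> vnorm2 n u" by (rule vnorm2_abs_mono)
      then show ?thesis using u(2) by simp
    qed
    have suppt: "supp ut \<subseteq> {i\<in>{..<n}. t \<le> \<bar>u i\<bar>}"
      using vspace_supp_sub[OF utv] by (auto simp: ut_def supp_def split: if_splits)
    have utc: "card (supp ut) \<le> k"
    proof (cases "n \<le> k")
      case True then show ?thesis using vspace_supp_card[OF utv] by simp
    next
      case False
      then have kb': "4 * real s \<le> real k * \<eta>\<^sup>2" using kb by simp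
      have fin: "finite {i\<in>{..<n}. t \<le> \<bar>u i\<bar>}" by simp
      have "t * card (supp ut) \<le> t * card {i\<in>{..<n}. t \<le> \<bar>u i\<bar>}"
        using card_mono[OF fin suppt] t by simp
      also have "\<dots> = (\<Sum>i\<in>{i\<in>{..<n}. t \<le> \<bar>u i\<bar>}. t)" by simp
      also have "\<dots> \<le> (\<Sum>i\<in>{i\<in>{..<n}. t \<le> \<bar>u i\<bar>}. \<bar>u i\<bar>)" by (rule sum_mono) simp
      also have "\<dots> \<le> (\<Sum>i<n. \<bar>u i\<bar>)" by (rule sum_mono2) auto
      also have "\<dots> \<le> sqrt s" using u(3) by (simp add: vnorm1_def)
      finally have "t * card (supp ut) \<le> sqrt s" .
      then have "card (supp ut) \<le> sqrt s / t" using t by (simp add: field_simps)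
      also have "sqrt s / t = 4 * s / \<eta>\<^sup>2" unfolding t_def using eta ss
        by (simp add: field_simps)
      also have "\<dots> \<le> k" using kb' eta by (simp add: field_simps)
      finally show ?thesis by simp
    qed
    obtain w where w: "w \<in> N" "vnorm2 n (\<lambda>i. ut i - w i) \<le> \<eta>/2" using N(4)[OF utv utc utn] hk by auto
    have tail: "vnorm2 n (\<lambda>i. u i - ut i) \<le> \<eta>/2"
    proof -
      have "(\<Sum>i<n. (u i - ut i)\<^sup>2) \<le> (\<Sum>i<n. t * \<bar>u i\<bar>)"
      proof (rule sum_mono)
        fix i
        show "(u i - ut i)\<^sup>2 \<le> t * \<bar>u i\<bar>"
        proof (cases "t \<le> \<bar>u i\<bar>")
          case True then show ?thesis using t by (simp add: ut_def)
        next
          case False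
          have "\<bar>u i\<bar> * \<bar>u i\<bar> \<le> t * \<bar>u i\<bar>" by (rule mult_right_mono) (use False in auto)
          moreover have "(u i)\<^sup>2 = \<bar>u i\<bar> * \<bar>u i\<bar>" by (simp add: power2_eq_square)
          ultimately have "(u i)\<^sup>2 \<le> t * \<bar>u i\<bar>" by simp
          then show ?thesis using False by (simp add: ut_def)
        qed
      qed
      also have "\<dots> = t * (\<Sum>i<n. \<bar>u i\<bar>)" by (simp add: sum_distrib_left)
      also have "\<dots> \<le> t * sqrt s" using u(3) t by (intro mult_left_mono) (auto simp: vnorm1_def)
      also have "\<dots> = (\<eta>/2)\<^sup>2"
      proof -
        have "\<eta>\<^sup>2 / (4 * sqrt s) * sqrt s = \<eta>\<^sup>2 / 4" using ss by (simp add: field_simps)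
        moreover have "(\<eta>/2)\<^sup>2 = \<eta>\<^sup>2 / 4" by (simp add: power_divide)
        ultimately show ?thesis unfolding t_def by simp
      qed
      finally have "sqrt (\<Sum>i<n. (u i - ut i)\<^sup>2) \<le> sqrt ((\<eta>/2)\<^sup>2)" by (rule real_sqrt_le_mono)
      then show ?thesis unfolding vnorm2_def using eta by simp
    qed
    have "vnorm2 n (\<lambda>i. u i - w i) = vnorm2 n (\<lambda>i. (u i - ut i) + (ut i - w i))" by simp
    also have "\<dots> \<le> vnorm2 n (\<lambda>i. u i - ut i) + vnorm2 n (\<lambda>i. ut i - w i)" by (rule vnorm2_triangle)
    also have "\<dots> \<le> \<eta>" using tail w by simp
    finally show ?thesis using w by blast
  qed
  have c': "real (card N) \<le> (8 * real n * sqrt k / \<eta>) ^ k" using N(2) e4 by simp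
  show ?thesis using N(1,3) c' ap by blast
qed



lemma ln_card_bound:
  assumes c: "card C \<le> a * b ^ R * c ^ R" and a: "real a \<le> BS" and b: "real b \<le> BU" and cc: "real c \<le> BV"
    and B: "1 \<le> BS" "1 \<le> BU" "1 \<le> BV"
  shows "ln (real (card C)) \<le> ln BS + real R * ln BU + real R * ln BV"
proof -
  have "real (card C) \<le> real a * real b ^ R * real c ^ R"
    using c by (metis of_nat_le_iff of_nat_mult of_nat_power)
  also have "\<dots> \<le> BS * BU ^ R * BV ^ R"
    using a b cc by (intro mult_mono power_mono) auto
  finally have le: "real (card C) \<le> BS * BU ^ R * BV ^ R" .
  have pos: "0 \<le> ln BS + real R * ln BU + real R * ln BV" using B by simp
  show ?thesis
  proof (cases "card C = 0")
    case True then show ?thesis using pos by simp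
  next
    case False
    then have "ln (real (card C)) \<le> ln (BS * BU ^ R * BV ^ R)" using le by (subst ln_le_cancel_iff) auto
    also have "\<dots> = ln BS + real R * ln BU + real R * ln BV"
      using B by (simp add: ln_mult ln_realpow)
    finally show ?thesis .
  qed
qed

lemma sqrt_le_self_real: "1 \<le> (x::real) \<Longrightarrow> sqrt x \<le> x"
proof -
  assume x: "1 \<le> x"
  have "x \<le> x * x" using x by (simp add: mult_le_cancel_left1)
  then have "sqrt x \<le> sqrt (x * x)" by (rule real_sqrt_le_mono)
  then show ?thesis using x by simp
qed

lemma one_le_12prod: "1 \<le> (x::real) \<Longrightarrow> 1 \<le> a \<Longrightarrow> 1 \<le> b \<Longrightarrow> 1 \<le> 12 * x * (a * b)"
proof -
  assume h: "1 \<le> x" "1 \<le> a" "1 \<le> b"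
  have "1 * 1 \<le> a * b" using h by (intro mult_mono) auto
  then have "1 * 1 \<le> x * (a * b)" using h by (intro mult_mono) auto
  then show ?thesis by simp
qed

lemma ln_12: "ln (12::real) \<le> 4 * ln 2" and ln_24: "ln (24::real) \<le> 5 * ln 2"
proof -
  have "ln (12::real) \<le> ln (2^4)" by (subst ln_le_cancel_iff) auto
  then show "ln (12::real) \<le> 4 * ln 2" by (simp only: ln_realpow of_nat_numeral)
  have "ln (24::real) \<le> ln (2^5)" by (subst ln_le_cancel_iff) auto
  then show "ln (24::real) \<le> 5 * ln 2" by (simp only: ln_realpow of_nat_numeral)
qed

lemma S_cover:
  assumes n: "1 \<le> n1" "1 \<le> n2" and s: "1 \<le> s1" "s1 \<le> n1" "1 \<le> s2" "s2 \<le> n2"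
    and R: "1 \<le> R" "R \<le> min n1 n2" and G: "1 \<le> \<Gamma>" and d: "0 < \<delta>" "\<delta> \<le> \<Gamma> * sqrt R"
    and L: "ln 2 \<le> ln (real (max n1 n2))"
  shows "\<exists>C. finite C \<and> C \<subseteq> mat_space n1 n2 \<and> (\<forall>Z\<in>S_set n1 n2 s1 s2 R \<Gamma>. \<exists>W\<in>C. frob_dist n1 n2 Z W \<le> \<delta>)
     \<and> ln (real (card C)) \<le> 16 * real R * real (s1 + s2) * ln (real (max n1 n2)) * (\<Gamma> * sqrt R / \<delta>)"
proof -
  define x where "x = \<Gamma> * sqrt R / \<delta>"
  define nn where "nn = real (max n1 n2)"
  define Lg where "Lg = ln nn"
  have sR: "1 \<le> sqrt R" using R by simp
  have x1: "1 \<le> x" unfolding x_def using d by simp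
  have x0: "0 < x" using x1 by simp
  have dx: "\<delta> = \<Gamma> * sqrt R / x" unfolding x_def using d G sR by (simp add: field_simps)
  define hs where "hs = 1 / (3 * x * sqrt R)"
  define hu where "hu = 1 / (3 * x * sqrt s1)"
  define hv where "hv = 1 / (3 * x * sqrt s2)"
  have ss1: "1 \<le> sqrt s1" "1 \<le> sqrt s2" using s by auto
  have hpos: "0 < hs" "0 < hu" "0 < hv" unfolding hs_def hu_def hv_def using x0 sR ss1 by auto
  have inv: "\<And>a::real. 1 \<le> a \<Longrightarrow> 1/a \<le> 1" by simp
  have m1: "1 \<le> x * sqrt R" "1 \<le> x * sqrt s1" "1 \<le> x * sqrt s2"
    using mult_mono[OF x1 sR] mult_mono[OF x1 ss1(1)] mult_mono[OF x1 ss1(2)] x0 by auto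
  have hle: "hs \<le> 1" "hu \<le> 1" "hv \<le> 1" unfolding hs_def hu_def hv_def
    by (rule inv, use m1 in \<open>simp add: mult.assoc\<close>)+
  obtain NS where NS: "finite NS" "real (card NS) \<le> (4 * real R / hs) ^ R" "\<forall>s\<in>NS. vnorm2 R s \<le> \<Gamma>"
    "\<forall>\<sigma>. vnorm2 R \<sigma> \<le> \<Gamma> \<longrightarrow> (\<exists>s\<in>NS. vnorm2 R (\<lambda>r. \<sigma> r - s r) \<le> \<Gamma> * (hs * sqrt R))"
    using sigma_net[of \<Gamma> hs R] G hpos hle R by auto
  obtain NU where NU: "finite NU" "real (card NU) \<le> (4 * real n1 / hu) ^ s1" "\<forall>w\<in>NU. w \<in> vspace n1 \<and> vnorm2 n1 w \<le> 1"
     "\<forall>u. u \<in> vspace n1 \<and> card (supp u) \<le> s1 \<and> vnorm2 n1 u \<le> 1 \<longrightarrow> (\<exists>w\<in>NU. vnorm2 n1 (\<lambda>i. u i - w i) \<le> hu * sqrt s1)"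
    using sparse_net[of hu n1 s1] hpos hle n by auto
  obtain NV where NV: "finite NV" "real (card NV) \<le> (4 * real n2 / hv) ^ s2" "\<forall>w\<in>NV. w \<in> vspace n2 \<and> vnorm2 n2 w \<le> 1"
     "\<forall>u. u \<in> vspace n2 \<and> card (supp u) \<le> s2 \<and> vnorm2 n2 u \<le> 1 \<longrightarrow> (\<exists>w\<in>NV. vnorm2 n2 (\<lambda>i. u i - w i) \<le> hv * sqrt s2)"
    using sparse_net[of hv n2 s2] hpos hle n by auto
  define U where "U = {u. u \<in> vspace n1 \<and> card (supp u) \<le> s1 \<and> vnorm2 n1 u \<le> 1}"
  define V where "V = {u. u \<in> vspace n2 \<and> card (supp u) \<le> s2 \<and> vnorm2 n2 u \<le> 1}"
  have M: "S_set n1 n2 s1 s2 R \<Gamma> \<subseteq> {rank_sum R \<sigma> u v | \<sigma> u v. vnorm2 R \<sigma> \<le> \<Gamma> \<and> (\<forall>r<R. u r \<in> U \<and> v r \<in> V)}"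
    unfolding S_set_def U_def V_def by fastforce
  obtain C where C: "finite C" "C \<subseteq> mat_space n1 n2" "card C \<le> card NS * card NU ^ R * card NV ^ R"
    "\<forall>Z\<in>S_set n1 n2 s1 s2 R \<Gamma>. \<exists>W\<in>C. frob_dist n1 n2 Z W \<le> sqrt R * (\<Gamma> * (hs * sqrt R)) + sqrt R * \<Gamma> * (hu * sqrt s1 + hv * sqrt s2)"
  proof (rule exE[OF generic_cover[OF NS(1) NU(1) NV(1) _ _ _ _ _ _ _ _ M]])
    show "\<And>w. w \<in> NU \<Longrightarrow> w \<in> vspace n1 \<and> vnorm2 n1 w \<le> 1" using NU(3) by blast
    show "\<And>w. w \<in> NV \<Longrightarrow> w \<in> vspace n2 \<and> vnorm2 n2 w \<le> 1" using NV(3) by blast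
    show "\<And>s. s \<in> NS \<Longrightarrow> vnorm2 R s \<le> \<Gamma>" using NS(3) by blast
    show "\<And>\<sigma>. vnorm2 R \<sigma> \<le> \<Gamma> \<Longrightarrow> \<exists>s\<in>NS. vnorm2 R (\<lambda>r. \<sigma> r - s r) \<le> \<Gamma> * (hs * sqrt R)" using NS(4) by blast
    show "\<And>u. u \<in> U \<Longrightarrow> vnorm2 n1 u \<le> 1 \<and> (\<exists>w\<in>NU. vnorm2 n1 (\<lambda>i. u i - w i) \<le> hu * sqrt s1)"
      using NU(4) unfolding U_def by blast
    show "\<And>u. u \<in> V \<Longrightarrow> vnorm2 n2 u \<le> 1 \<and> (\<exists>w\<in>NV. vnorm2 n2 (\<lambda>i. u i - w i) \<le> hv * sqrt s2)"
      using NV(4) unfolding V_def by blast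
    show "0 \<le> hu * sqrt s1" "0 \<le> hv * sqrt s2" using hpos by auto
  qed blast
  have e1: "sqrt R * (\<Gamma> * (hs * sqrt R)) = \<delta> / 3"
    unfolding hs_def dx using sR x0 G by (simp add: field_simps)
  have e2: "hu * sqrt s1 = 1 / (3 * x)" "hv * sqrt s2 = 1 / (3 * x)"
    unfolding hu_def hv_def using ss1 x0 by (auto simp: field_simps)
  have e3: "sqrt R * \<Gamma> * (1 / (3 * x) + 1 / (3 * x)) = 2 * \<delta> / 3"
    unfolding dx using x0 by (simp add: field_simps)
  have cov: "\<forall>Z\<in>S_set n1 n2 s1 s2 R \<Gamma>. \<exists>W\<in>C. frob_dist n1 n2 Z W \<le> \<delta>"
    using C(4) unfolding e1 e2 e3 by auto
  have nn1: "1 \<le> nn" unfolding nn_def using n by simp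
  have Lg0: "ln 2 \<le> Lg" using L unfolding Lg_def nn_def .
  have Rn: "real R \<le> nn" "sqrt R \<le> nn" using R sR unfolding nn_def by (auto intro: order_trans[OF sqrt_le_self_real])
  have key: "ln (12 * x * (a * b)) \<le> 8 * Lg * x" if ab: "1 \<le> a" "a \<le> nn" "1 \<le> b" "b \<le> nn" for a b
  proof -
    have "ln (12 * x * (a * b)) = ln 12 + ln x + ln a + ln b" using ab x0 by (simp add: ln_mult)
    also have "\<dots> \<le> 4 * ln 2 + x + Lg + Lg"
      using ln_12 ln_bound[OF x0] ab unfolding Lg_def by (intro add_mono) auto
    also have "\<dots> \<le> 8 * Lg * x"
    proof -
      have "0 < ln (2::real)" by simp
      then have "1 \<le> 2 * Lg" using Lg0 ln_2_less_1 ln2_ge_two_thirds by linarith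
      then have "x \<le> 2 * Lg * x" using x0 by (simp add: mult_le_cancel_right1)
      moreover have "6 * Lg \<le> 6 * Lg * x"
      proof -
        have "0 \<le> 6 * Lg" using Lg0 \<open>0 < ln (2::real)\<close> by linarith
        then show ?thesis using mult_left_mono[OF x1, of "6 * Lg"] by simp
      qed
      ultimately show ?thesis using Lg0 by linarith
    qed
    finally show ?thesis .
  qed
  have bS: "4 * real R / hs = 12 * x * (real R * sqrt R)" unfolding hs_def using x0 sR by (simp add: field_simps)
  have bU: "4 * real n1 / hu = 12 * x * (real n1 * sqrt s1)" unfolding hu_def using x0 ss1 by (simp add: field_simps)
  have bV: "4 * real n2 / hv = 12 * x * (real n2 * sqrt s2)" unfolding hv_def using x0 ss1 by (simp add: field_simps)
  have s1n: "sqrt s1 \<le> nn" "sqrt s2 \<le> nn" "real n1 \<le> nn" "real n2 \<le> nn"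
    using s unfolding nn_def by (auto intro: order_trans[OF sqrt_le_self_real])
  have kS: "ln (4 * real R / hs) \<le> 8 * Lg * x" unfolding bS by (rule key) (use R Rn sR in auto)
  have kU: "ln (4 * real n1 / hu) \<le> 8 * Lg * x" unfolding bU by (rule key) (use n s1n ss1 in auto)
  have kV: "ln (4 * real n2 / hv) \<le> 8 * Lg * x" unfolding bV by (rule key) (use n s1n ss1 in auto)
  have g1: "1 \<le> 4 * real R / hs" "1 \<le> 4 * real n1 / hu" "1 \<le> 4 * real n2 / hv"
    unfolding bS bU bV using x1 R n sR ss1 by (auto intro!: one_le_12prod)
  have lnC: "ln (real (card C)) \<le> ln ((4 * real R / hs) ^ R) + real R * ln ((4 * real n1 / hu) ^ s1)
       + real R * ln ((4 * real n2 / hv) ^ s2)"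
    by (rule ln_card_bound[OF C(3) NS(2) NU(2) NV(2)]) (use g1 in auto)
  also have "\<dots> = real R * ln (4 * real R / hs) + real R * real s1 * ln (4 * real n1 / hu)
       + real R * real s2 * ln (4 * real n2 / hv)" by (simp add: ln_realpow)
  also have "\<dots> \<le> real R * (8 * Lg * x) + real R * real s1 * (8 * Lg * x) + real R * real s2 * (8 * Lg * x)"
    using kS kU kV R by (intro add_mono mult_left_mono) auto
  also have "\<dots> = (real R + real R * real s1 + real R * real s2) * (8 * Lg * x)" by (simp add: algebra_simps)
  also have "\<dots> \<le> (2 * (real R * real (s1 + s2))) * (8 * Lg * x)"
  proof (rule mult_right_mono)
    have "real R \<le> real R * real s1" using s R by simp
    moreover have "0 \<le> real R * real s2" by simp
    show "real R + real R * real s1 + real R * real s2 \<le> 2 * (real R * real (s1 + s2))"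
    proof -
      have "2 * (real R * real (s1 + s2)) = 2 * (real R * real s1) + 2 * (real R * real s2)"
        by (simp add: distrib_left)
      then show ?thesis using \<open>real R \<le> real R * real s1\<close> \<open>0 \<le> real R * real s2\<close> by linarith
    qed
    show "0 \<le> 8 * Lg * x" using Lg0 x0 ln2_ge_two_thirds by auto
  qed
  also have "\<dots> = 16 * real R * real (s1 + s2) * ln (real (max n1 n2)) * (\<Gamma> * sqrt R / \<delta>)"
    unfolding Lg_def nn_def x_def by simp
  finally show ?thesis using C(1,2) cov by blast
qed



lemma one_le_mult_sq: "1 \<le> (a::real) \<Longrightarrow> 1 \<le> x \<Longrightarrow> 1 \<le> a * x\<^sup>2"
proof -
  assume h: "1 \<le> a" "1 \<le> x"
  have "1 \<le> x\<^sup>2" using h by (simp add: one_le_power)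
  then have "1 * 1 \<le> a * x\<^sup>2" using h by (intro mult_mono) auto
  then show ?thesis by simp
qed

lemma one_le_24prod: "1 \<le> (x::real) \<Longrightarrow> 1 \<le> a \<Longrightarrow> 1 \<le> b \<Longrightarrow> 1 \<le> 24 * x * (a * b)"
  using one_le_12prod[of x a b] by linarith

lemma K_cover:
  assumes n: "1 \<le> n1" "1 \<le> n2" and s: "1 \<le> s1" "s1 \<le> n1" "1 \<le> s2" "s2 \<le> n2"
    and R: "1 \<le> R" "R \<le> min n1 n2" and G: "1 \<le> \<Gamma>" and d: "0 < \<delta>" "\<delta> \<le> \<Gamma> * sqrt R"
    and L: "ln 2 \<le> ln (real (max n1 n2))"
  shows "\<exists>C. finite C \<and> C \<subseteq> mat_space n1 n2 \<and> (\<forall>Z\<in>KR_set n1 n2 s1 s2 R \<Gamma>. \<exists>W\<in>C. frob_dist n1 n2 Z W \<le> \<delta>)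
     \<and> ln (real (card C)) \<le> 3 * real R * min (real (max n1 n2)) (37 * real (s1 + s2) * (\<Gamma> * sqrt R / \<delta>)\<^sup>2)
         * (7 * ln (real (max n1 n2)) + ln (\<Gamma> * sqrt R / \<delta>))"
proof -
  define x where "x = \<Gamma> * sqrt R / \<delta>"
  define nn where "nn = real (max n1 n2)"
  define Lg where "Lg = ln nn"
  have sR: "1 \<le> sqrt R" using R by simp
  have x1: "1 \<le> x" unfolding x_def using d by simp
  have x0: "0 < x" using x1 by simp
  have dx: "\<delta> = \<Gamma> * sqrt R / x" unfolding x_def using d G sR by (simp add: field_simps)
  define hs where "hs = 1 / (3 * x * sqrt R)"
  define \<eta> where "\<eta> = 1 / (3 * x)"
  define k1 where "k1 = min n1 (nat \<lceil>36 * real s1 * x\<^sup>2\<rceil>)"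
  define k2 where "k2 = min n2 (nat \<lceil>36 * real s2 * x\<^sup>2\<rceil>)"
  have inv: "\<And>a::real. 1 \<le> a \<Longrightarrow> 1/a \<le> 1" by simp
  have m1: "1 \<le> x * sqrt R" using mult_mono[OF x1 sR] x0 by auto
  have hs: "0 < hs" "hs \<le> 1" unfolding hs_def using x0 sR
    by (auto intro!: inv simp: mult.assoc) (use m1 in linarith)
  have eta: "0 < \<eta>" "\<eta> \<le> 1" unfolding \<eta>_def using x1 by auto
  have kprops: "1 \<le> k \<and> real k \<le> nn \<and> real k \<le> 37 * real sj * x\<^sup>2 \<and> (nj \<le> k \<or> 4 * real sj \<le> real k * \<eta>\<^sup>2)"
    if kdef: "k = min nj (nat \<lceil>36 * real sj * x\<^sup>2\<rceil>)" and sj: "1 \<le> sj" and nj: "1 \<le> nj" "nj \<le> max n1 n2" for k sj nj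
  proof -
    define y where "y = 36 * real sj * x\<^sup>2"
    have sx: "1 \<le> real sj * x\<^sup>2" using sj x1 by (intro one_le_mult_sq) auto
    have y1: "36 \<le> y" unfolding y_def using sx by simp
    have cy: "real (nat \<lceil>y\<rceil>) = of_int \<lceil>y\<rceil>" using y1 by simp
    have cy1: "y \<le> of_int \<lceil>y\<rceil>" "of_int \<lceil>y\<rceil> < y + 1" using ceiling_correct[of y] by linarith+
    have "1 \<le> real (nat \<lceil>y\<rceil>)" using cy cy1(1) y1 by linarith
    then have ny: "1 \<le> nat \<lceil>y\<rceil>" by linarith
    have "1 \<le> k" using kdef nj ny unfolding y_def[symmetric] by auto
    moreover have "real k \<le> nn" using kdef nj unfolding nn_def by auto
    moreover have "real k \<le> 37 * real sj * x\<^sup>2"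
    proof -
      have "real k \<le> real (nat \<lceil>y\<rceil>)" using kdef unfolding y_def[symmetric] by simp
      also have "\<dots> \<le> y + 1" using cy cy1 by simp
      also have "\<dots> \<le> 37 * real sj * x\<^sup>2"
      proof -
        show ?thesis unfolding y_def using sx by simp
      qed
      finally show ?thesis .
    qed
    moreover have "nj \<le> k \<or> 4 * real sj \<le> real k * \<eta>\<^sup>2"
    proof (cases "nj \<le> nat \<lceil>y\<rceil>")
      case True then show ?thesis using kdef unfolding y_def[symmetric] by simp
    next
      case False
      then have kk: "k = nat \<lceil>y\<rceil>" using kdef unfolding y_def[symmetric] by simp
      have "4 * real sj = y * \<eta>\<^sup>2" unfolding y_def \<eta>_def using x0 by (simp add: field_simps power2_eq_square)
      also have "\<dots> \<le> real k * \<eta>\<^sup>2" using kk cy cy1 by (intro mult_right_mono) auto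
      finally show ?thesis by simp
    qed
    ultimately show ?thesis by blast
  qed
  have k1p: "1 \<le> k1" "real k1 \<le> nn" "real k1 \<le> 37 * real s1 * x\<^sup>2" "n1 \<le> k1 \<or> 4 * real s1 \<le> real k1 * \<eta>\<^sup>2"
    using kprops[OF k1_def s(1) n(1)] by auto
  have k2p: "1 \<le> k2" "real k2 \<le> nn" "real k2 \<le> 37 * real s2 * x\<^sup>2" "n2 \<le> k2 \<or> 4 * real s2 \<le> real k2 * \<eta>\<^sup>2"
    using kprops[OF k2_def s(3) n(2)] by auto
  obtain NS where NS: "finite NS" "real (card NS) \<le> (4 * real R / hs) ^ R" "\<forall>s\<in>NS. vnorm2 R s \<le> \<Gamma>"
    "\<forall>\<sigma>. vnorm2 R \<sigma> \<le> \<Gamma> \<longrightarrow> (\<exists>s\<in>NS. vnorm2 R (\<lambda>r. \<sigma> r - s r) \<le> \<Gamma> * (hs * sqrt R))"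
    using sigma_net[of \<Gamma> hs R] G hs R by auto
  obtain NU where NU: "finite NU" "real (card NU) \<le> (8 * real n1 * sqrt k1 / \<eta>) ^ k1" "\<forall>w\<in>NU. w \<in> vspace n1 \<and> vnorm2 n1 w \<le> 1"
     "\<forall>u. u \<in> vspace n1 \<and> vnorm2 n1 u \<le> 1 \<and> vnorm1 n1 u \<le> sqrt s1 \<longrightarrow> (\<exists>w\<in>NU. vnorm2 n1 (\<lambda>i. u i - w i) \<le> \<eta>)"
    using K_net[OF eta n(1) s(1) k1p(1) k1p(4)] by blast
  obtain NV where NV: "finite NV" "real (card NV) \<le> (8 * real n2 * sqrt k2 / \<eta>) ^ k2" "\<forall>w\<in>NV. w \<in> vspace n2 \<and> vnorm2 n2 w \<le> 1"
     "\<forall>u. u \<in> vspace n2 \<and> vnorm2 n2 u \<le> 1 \<and> vnorm1 n2 u \<le> sqrt s2 \<longrightarrow> (\<exists>w\<in>NV. vnorm2 n2 (\<lambda>i. u i - w i) \<le> \<eta>)"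
    using K_net[OF eta n(2) s(3) k2p(1) k2p(4)] by blast
  define U where "U = {u. u \<in> vspace n1 \<and> vnorm2 n1 u \<le> 1 \<and> vnorm1 n1 u \<le> sqrt s1}"
  define V where "V = {u. u \<in> vspace n2 \<and> vnorm2 n2 u \<le> 1 \<and> vnorm1 n2 u \<le> sqrt s2}"
  have M: "KR_set n1 n2 s1 s2 R \<Gamma> \<subseteq> {rank_sum R \<sigma> u v | \<sigma> u v. vnorm2 R \<sigma> \<le> \<Gamma> \<and> (\<forall>r<R. u r \<in> U \<and> v r \<in> V)}"
    unfolding KR_set_def U_def V_def K_set_def by fastforce
  obtain C where C: "finite C" "C \<subseteq> mat_space n1 n2" "card C \<le> card NS * card NU ^ R * card NV ^ R"
    "\<forall>Z\<in>KR_set n1 n2 s1 s2 R \<Gamma>. \<exists>W\<in>C. frob_dist n1 n2 Z W \<le> sqrt R * (\<Gamma> * (hs * sqrt R)) + sqrt R * \<Gamma> * (\<eta> + \<eta>)"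
  proof (rule exE[OF generic_cover[OF NS(1) NU(1) NV(1) _ _ _ _ _ _ _ _ M]])
    show "\<And>w. w \<in> NU \<Longrightarrow> w \<in> vspace n1 \<and> vnorm2 n1 w \<le> 1" using NU(3) by blast
    show "\<And>w. w \<in> NV \<Longrightarrow> w \<in> vspace n2 \<and> vnorm2 n2 w \<le> 1" using NV(3) by blast
    show "\<And>s. s \<in> NS \<Longrightarrow> vnorm2 R s \<le> \<Gamma>" using NS(3) by blast
    show "\<And>\<sigma>. vnorm2 R \<sigma> \<le> \<Gamma> \<Longrightarrow> \<exists>s\<in>NS. vnorm2 R (\<lambda>r. \<sigma> r - s r) \<le> \<Gamma> * (hs * sqrt R)" using NS(4) by blast
    show "\<And>u. u \<in> U \<Longrightarrow> vnorm2 n1 u \<le> 1 \<and> (\<exists>w\<in>NU. vnorm2 n1 (\<lambda>i. u i - w i) \<le> \<eta>)"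
      using NU(4) unfolding U_def by blast
    show "\<And>u. u \<in> V \<Longrightarrow> vnorm2 n2 u \<le> 1 \<and> (\<exists>w\<in>NV. vnorm2 n2 (\<lambda>i. u i - w i) \<le> \<eta>)"
      using NV(4) unfolding V_def by blast
    show "0 \<le> \<eta>" "0 \<le> \<eta>" using eta by auto
  qed blast
  have e1: "sqrt R * (\<Gamma> * (hs * sqrt R)) = \<delta> / 3"
    unfolding hs_def dx using sR x0 G by (simp add: field_simps)
  have e3: "sqrt R * \<Gamma> * (\<eta> + \<eta>) = 2 * \<delta> / 3"
    unfolding dx \<eta>_def using x0 by (simp add: field_simps)
  have cov: "\<forall>Z\<in>KR_set n1 n2 s1 s2 R \<Gamma>. \<exists>W\<in>C. frob_dist n1 n2 Z W \<le> \<delta>"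
    using C(4) unfolding e1 e3 by auto
  have nn1: "1 \<le> nn" unfolding nn_def using n by simp
  have Lg0: "ln 2 \<le> Lg" using L unfolding Lg_def nn_def .
  have l2: "0 < ln (2::real)" by simp
  have lx: "0 \<le> ln x" using x1 by simp
  have key: "ln (c * x * (a * b)) \<le> 7 * Lg + ln x"
    if ab: "1 \<le> a" "a \<le> nn" "1 \<le> b" "b \<le> nn" and c: "c = 12 \<or> c = 24" for a b c
  proof -
    have c0: "0 < c" using c by auto
    have "ln (c * x * (a * b)) = ln c + ln x + ln a + ln b" using ab x0 c0 by (simp add: ln_mult)
    also have "\<dots> \<le> 5 * ln 2 + ln x + Lg + Lg"
    proof -
      have "ln c \<le> 5 * ln 2"
      proof (cases "c = 12")
        case True
        have "ln c = ln 12" using True by simp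
        then show ?thesis using ln_12 l2 by linarith
      next
        case False then have "c = 24" using c by simp
        then have "ln c = ln 24" by simp
        then show ?thesis using ln_24 by linarith
      qed
      moreover have "ln a \<le> Lg" "ln b \<le> Lg" using ab unfolding Lg_def by auto
      ultimately show ?thesis by linarith
    qed
    also have "\<dots> \<le> 7 * Lg + ln x" using Lg0 by linarith
    finally show ?thesis .
  qed
  have s1n: "sqrt k1 \<le> nn" "sqrt k2 \<le> nn" "real n1 \<le> nn" "real n2 \<le> nn" "real R \<le> nn" "sqrt R \<le> nn"
    using k1p k2p R sR unfolding nn_def by (auto intro: order_trans[OF sqrt_le_self_real])
  have sk: "1 \<le> sqrt k1" "1 \<le> sqrt k2" using k1p k2p by auto
  have bS: "4 * real R / hs = 12 * x * (real R * sqrt R)" unfolding hs_def using x0 sR by (simp add: field_simps)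
  have bU: "8 * real n1 * sqrt k1 / \<eta> = 24 * x * (real n1 * sqrt k1)" unfolding \<eta>_def using x0 by (simp add: field_simps)
  have bV: "8 * real n2 * sqrt k2 / \<eta> = 24 * x * (real n2 * sqrt k2)" unfolding \<eta>_def using x0 by (simp add: field_simps)
  have kS: "ln (4 * real R / hs) \<le> 7 * Lg + ln x" unfolding bS by (rule key) (use R s1n sR in auto)
  have kU: "ln (8 * real n1 * sqrt k1 / \<eta>) \<le> 7 * Lg + ln x" unfolding bU by (rule key) (use n s1n sk in auto)
  have kV: "ln (8 * real n2 * sqrt k2 / \<eta>) \<le> 7 * Lg + ln x" unfolding bV by (rule key) (use n s1n sk in auto)
  have g1: "1 \<le> 4 * real R / hs" "1 \<le> 8 * real n1 * sqrt k1 / \<eta>" "1 \<le> 8 * real n2 * sqrt k2 / \<eta>"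
    unfolding bS bU bV using x1 R n sR sk by (auto intro!: one_le_12prod one_le_24prod)
  have g2: "1 \<le> (4 * real R / hs) ^ R" "1 \<le> (8 * real n1 * sqrt k1 / \<eta>) ^ k1" "1 \<le> (8 * real n2 * sqrt k2 / \<eta>) ^ k2"
    using g1 by (auto intro: one_le_power)
  define Q where "Q = 7 * Lg + ln x"
  have Q0: "0 \<le> Q" unfolding Q_def using Lg0 l2 lx by linarith
  have "ln (real (card C)) \<le> ln ((4 * real R / hs) ^ R) + real R * ln ((8 * real n1 * sqrt k1 / \<eta>) ^ k1)
       + real R * ln ((8 * real n2 * sqrt k2 / \<eta>) ^ k2)"
    by (rule ln_card_bound[OF C(3) NS(2) NU(2) NV(2) g2])
  also have "\<dots> = real R * ln (4 * real R / hs) + real R * real k1 * ln (8 * real n1 * sqrt k1 / \<eta>)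
       + real R * real k2 * ln (8 * real n2 * sqrt k2 / \<eta>)" by (simp add: ln_realpow)
  also have "\<dots> \<le> real R * Q + real R * real k1 * Q + real R * real k2 * Q"
    using kS kU kV R unfolding Q_def by (intro add_mono mult_left_mono) auto
  also have "\<dots> = real R * (1 + real k1 + real k2) * Q" by (simp add: algebra_simps)
  also have "\<dots> \<le> real R * (3 * min nn (37 * real (s1 + s2) * x\<^sup>2)) * Q"
  proof (intro mult_right_mono mult_left_mono Q0)
    define Mx where "Mx = min nn (37 * real (s1 + s2) * x\<^sup>2)"
    have "1 \<le> 37 * real (s1 + s2) * x\<^sup>2"
    proof -
      have "1 \<le> real (s1 + s2) * x\<^sup>2" using s x1 by (intro one_le_mult_sq) auto
      moreover have "37 * real (s1 + s2) * x\<^sup>2 = 37 * (real (s1 + s2) * x\<^sup>2)" by simp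
      ultimately show ?thesis by linarith
    qed
    then have M1: "1 \<le> Mx" unfolding Mx_def using nn1 by simp
    have "real k1 + real k2 \<le> 2 * nn" using k1p k2p by simp
    moreover have "real k1 + real k2 \<le> 37 * real (s1 + s2) * x\<^sup>2" using k1p k2p by (simp add: algebra_simps)
    moreover have "37 * real (s1 + s2) * x\<^sup>2 \<le> 2 * (37 * real (s1 + s2) * x\<^sup>2)" by simp
    ultimately have "real k1 + real k2 \<le> 2 * Mx" unfolding Mx_def min_def by (auto split: if_splits)
    then show "1 + real k1 + real k2 \<le> 3 * min nn (37 * real (s1 + s2) * x\<^sup>2)" using M1 unfolding Mx_def by linarith
  qed simp
  also have "\<dots> = 3 * real R * min (real (max n1 n2)) (37 * real (s1 + s2) * (\<Gamma> * sqrt R / \<delta>)\<^sup>2)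
         * (7 * ln (real (max n1 n2)) + ln (\<Gamma> * sqrt R / \<delta>))"
    unfolding Q_def Lg_def nn_def x_def by simp
  finally show ?thesis using C(1,2) cov by blast
qed



lemma spike_0D:
  fixes f :: "real \<Rightarrow> real"
  shows "(f has_integral y) {0..D} \<longleftrightarrow> (f has_integral y) {0<..D}"
proof (rule has_integral_spike_set_eq)
  show "negligible {x \<in> {0..D} - {0<..D}. f x \<noteq> 0}"
    by (rule negligible_subset[of "{0}"]) auto
  show "negligible {x \<in> {0<..D} - {0..D}. f x \<noteq> 0}" by (rule negligible_subset[of "{}"]) auto
qed

lemma dudley_integral:
  fixes f :: "real \<Rightarrow> real"
  assumes D: "0 < D" and al: "0 < \<alpha>" "\<alpha> \<le> 1" and c: "0 \<le> c"
    and f0: "\<And>e. 0 < e \<Longrightarrow> e \<le> D \<Longrightarrow> 0 \<le> f e"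
    and fanti: "\<And>a b. 0 < a \<Longrightarrow> a \<le> b \<Longrightarrow> b \<le> D \<Longrightarrow> f b \<le> f a"
    and fb: "\<And>e. 0 < e \<Longrightarrow> e \<le> D \<Longrightarrow> f e \<le> c * D powr (1 - \<alpha>) * e powr (\<alpha> - 1)"
  shows "f integrable_on {0..D} \<and> integral {0..D} f \<le> c * D / \<alpha>"
proof -
  define g where "g e = c * D powr (1 - \<alpha>) * e powr (\<alpha> - 1)" for e
  have "((\<lambda>e. e powr (\<alpha> - 1)) has_integral (D powr (\<alpha> - 1 + 1) / (\<alpha> - 1 + 1))) {0..D}"
    by (rule has_integral_powr_from_0) (use al D in auto)
  then have hI: "((\<lambda>e. (c * D powr (1 - \<alpha>)) * e powr (\<alpha> - 1)) has_integral
      (c * D powr (1 - \<alpha>)) * (D powr \<alpha> / \<alpha>)) {0..D}"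
    by (intro has_integral_mult_right) simp
  have eq: "(c * D powr (1 - \<alpha>)) * (D powr \<alpha> / \<alpha>) = c * D / \<alpha>"
  proof -
    have "D powr (1 - \<alpha>) * D powr \<alpha> = D powr (1 - \<alpha> + \<alpha>)" by (rule powr_add[symmetric])
    also have "\<dots> = D" using D by simp
    finally have "D powr (1 - \<alpha>) * D powr \<alpha> = D" .
    then show ?thesis by (simp add: field_simps)
  qed
  have gI: "(g has_integral (c * D / \<alpha>)) {0..D}" using hI unfolding eq g_def .
  then have gI': "(g has_integral (c * D / \<alpha>)) {0<..D}" using spike_0D by blast
  have S: "{0<..D} \<in> sets lebesgue" by simp
  have mono: "mono_on {0<..D} (\<lambda>e. - f e)"
    by (rule mono_onI) (use fanti in \<open>auto\<close>)
  have "(\<lambda>e. - f e) \<in> borel_measurable (restrict_space borel {0<..D})"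
    by (rule borel_measurable_mono_on_fnc[OF mono])
  then have "(\<lambda>e. - f e) \<in> borel_measurable (lebesgue_on {0<..D})"
  proof -
    assume h: "(\<lambda>e. - f e) \<in> borel_measurable (restrict_space borel {0<..D})"
    have "space lborel = space lebesgue" "sets borel \<subseteq> sets lebesgue" by force+
    then show ?thesis
      by (metis h borel_measurable_subalgebra mono_restrict_space space_lborel space_restrict_space)
  qed
  then have meas: "(\<lambda>e. - (- f e)) \<in> borel_measurable (lebesgue_on {0<..D})"
    by (rule borel_measurable_uminus)
  have fint': "f integrable_on {0<..D}"
  proof (rule measurable_bounded_by_integrable_imp_integrable_real[OF _ _ _ S])
    show "f \<in> borel_measurable (lebesgue_on {0<..D})" using meas by simp
    show "g integrable_on {0<..D}" using gI' by blast
    show "\<bar>f x\<bar> \<le> g x" if "x \<in> {0<..D}" for x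
      using f0[of x] fb[of x] that unfolding g_def by auto
  qed
  have fI': "(f has_integral integral {0<..D} f) {0<..D}" using fint' by (rule integrable_integral)
  then have fI: "(f has_integral integral {0<..D} f) {0..D}" using spike_0D by blast
  have "integral {0<..D} f \<le> integral {0<..D} g"
    by (rule integral_le[OF fint']) (use gI' fb in \<open>auto simp: g_def\<close>)
  also have "integral {0<..D} g = c * D / \<alpha>" using gI' by (rule integral_unique)
  finally have le: "integral {0<..D} f \<le> c * D / \<alpha>" .
  have "f integrable_on {0..D}" using fI by blast
  then show ?thesis using le integral_unique[OF fI] by simp
qed

lemma cov_le_card:
  assumes "finite C" "C \<subseteq> mat_space n1 n2" "\<forall>Z\<in>M. \<exists>W\<in>C. frob_dist n1 n2 Z W \<le> e"
  shows "covering_number n1 n2 M e \<le> card C"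
  unfolding covering_number_def by (rule cInf_lower) (use assms in auto)

lemma cov_anti:
  assumes "finite C" "C \<subseteq> mat_space n1 n2" "\<forall>Z\<in>M. \<exists>W\<in>C. frob_dist n1 n2 Z W \<le> e1" "e1 \<le> e2"
  shows "covering_number n1 n2 M e2 \<le> covering_number n1 n2 M e1"
  unfolding covering_number_def
proof (rule cInf_superset_mono)
  show "{card C |C. finite C \<and> C \<subseteq> mat_space n1 n2 \<and> (\<forall>Z\<in>M. \<exists>W\<in>C. frob_dist n1 n2 Z W \<le> e1)} \<noteq> {}"
    using assms by blast
  show "bdd_below {card C |C. finite C \<and> C \<subseteq> mat_space n1 n2 \<and> (\<forall>Z\<in>M. \<exists>W\<in>C. frob_dist n1 n2 Z W \<le> e2)}"
    by (rule bdd_belowI[of _ 0]) auto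
  show "{card C |C. finite C \<and> C \<subseteq> mat_space n1 n2 \<and> (\<forall>Z\<in>M. \<exists>W\<in>C. frob_dist n1 n2 Z W \<le> e1)} \<subseteq>
    {card C |C. finite C \<and> C \<subseteq> mat_space n1 n2 \<and> (\<forall>Z\<in>M. \<exists>W\<in>C. frob_dist n1 n2 Z W \<le> e2)}"
    using assms(4) by force
qed

lemma sqrt_ln_nat_mono: "k \<le> l \<Longrightarrow> sqrt (ln (real k)) \<le> sqrt (ln (real l))"
proof (cases "k = 0")
  case True
  then show ?thesis by (cases "l = 0") auto
next
  case False
  assume "k \<le> l"
  then show ?thesis using False by simp
qed

lemma sqrt_ln_nat_nonneg: "0 \<le> sqrt (ln (real k))"
  by (cases "k = 0") auto



lemma K_pointwise:
  fixes L nn s x :: real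
  assumes L: "ln 2 \<le> L" and nn: "0 < nn" "ln nn = L" and s: "1 \<le> s" and x: "1 \<le> x"
  shows "3 * min nn (37 * s * x\<^sup>2) * (7 * L + ln x) \<le> 1024 * s * L * (x powr (1 - 1/(8*L)))\<^sup>2"
proof -
  define a where "a = ln x"
  define \<alpha> where "\<alpha> = 1/(8*L)"
  have l2: "2/3 \<le> ln (2::real)" by (rule ln2_ge_two_thirds)
  have L23: "2/3 \<le> L" using L l2 by linarith
  have L0: "0 < L" using L23 by linarith
  have a0: "0 \<le> a" unfolding a_def using x by simp
  have x0: "0 < x" using x by simp
  have xa: "x = exp a" unfolding a_def using x0 by simp
  have nnL: "nn = exp L" using nn by (metis exp_ln)
  have aL: "\<alpha> * L = 1/8" unfolding \<alpha>_def using L0 by simp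
  have al0: "0 < \<alpha>" unfolding \<alpha>_def using L0 by simp
  have al2: "\<alpha> \<le> 1/2" unfolding \<alpha>_def using L23 by (simp add: field_simps)
  have rhs: "(x powr (1 - \<alpha>))\<^sup>2 = exp (2 * (1 - \<alpha>) * a)"
  proof -
    have "x powr (1 - \<alpha>) = exp ((1 - \<alpha>) * a)" unfolding a_def using x0 by (simp add: powr_def)
    then have "(x powr (1 - \<alpha>))\<^sup>2 = exp ((1 - \<alpha>) * a) * exp ((1 - \<alpha>) * a)" by (simp add: power2_eq_square)
    also have "\<dots> = exp (2 * (1 - \<alpha>) * a)" by (simp add: exp_add[symmetric])
    finally show ?thesis .
  qed
  have x2: "x\<^sup>2 = exp (2 * a)" unfolding xa by (simp add: power2_eq_square exp_add[symmetric])
  have Q0: "0 \<le> 7 * L + ln x" using L0 a0 unfolding a_def by simp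
  have e8: "7/8 \<le> exp (-(1/8::real))" using exp_ge_add_one_self[of "-(1/8::real)"] by simp
  show ?thesis
  proof (cases "2 * a \<le> L")
    case True
    have "3 * min nn (37 * s * x\<^sup>2) * (7 * L + ln x) \<le> 3 * (37 * s * exp (2 * a)) * (15/2 * L)"
    proof (rule mult_mono)
      show "3 * min nn (37 * s * x\<^sup>2) \<le> 3 * (37 * s * exp (2 * a))" using x2 by simp
      show "7 * L + ln x \<le> 15/2 * L" using True unfolding a_def by simp
    qed (use L0 s Q0 in \<open>auto intro!: mult_nonneg_nonneg\<close>)
    also have "\<dots> = (3 * 37 * 15 / 2) * (s * L * exp (2 * a))" by (simp add: algebra_simps)
    also have "\<dots> \<le> (1024 * 7/8) * (s * L * exp (2 * a))"
      by (intro mult_right_mono) (use s L0 in auto)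
    also have "\<dots> \<le> 1024 * (s * L * exp (2 * a)) * exp (-(2 * \<alpha> * a))"
    proof -
      have "2 * \<alpha> * a \<le> 1/8"
      proof -
        have "2 * \<alpha> * a \<le> \<alpha> * L" using True al0 by (simp add: mult.assoc mult_left_mono)
        then show ?thesis using aL by simp
      qed
      then have "7/8 \<le> exp (-(2 * \<alpha> * a))" using exp_ge_add_one_self[of "-(2 * \<alpha> * a)"] by linarith
      then have "(s * L * exp (2 * a)) * (7/8) \<le> (s * L * exp (2 * a)) * exp (-(2 * \<alpha> * a))"
        by (intro mult_left_mono) (use s L0 in auto)
      then show ?thesis by (simp add: algebra_simps)
    qed
    also have "\<dots> = 1024 * s * L * exp (2 * (1 - \<alpha>) * a)"
      by (simp add: exp_add[symmetric] algebra_simps)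
    finally show ?thesis unfolding rhs[unfolded \<alpha>_def] \<alpha>_def .
  next
    case False
    define b where "b = 2 * a - L"
    have b0: "0 \<le> b" unfolding b_def using False by simp
    have "3 * min nn (37 * s * x\<^sup>2) * (7 * L + ln x) \<le> 3 * nn * (7 * L + ln x)"
      by (intro mult_right_mono Q0) simp
    also have "\<dots> = nn * (45/2 * L + 3/2 * b)" unfolding b_def a_def by (simp add: algebra_simps)
    also have "\<dots> \<le> nn * (896 * L + 448 * L * b)"
    proof (intro mult_left_mono)
      have "3/2 * b \<le> 448 * L * b" using b0 L23 by (intro mult_right_mono) auto
      then show "45/2 * L + 3/2 * b \<le> 896 * L + 448 * L * b" using L0 by linarith
    qed (use nn in simp)
    also have "\<dots> = (1024 * L * nn) * ((7/8) * (1 + b/2))" by (simp add: algebra_simps)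
    also have "\<dots> \<le> (1024 * L * nn) * (exp (-(1/8)) * exp ((1 - \<alpha>) * b))"
    proof (intro mult_left_mono mult_mono e8)
      have "1/2 * b \<le> (1 - \<alpha>) * b" using al2 b0 by (intro mult_right_mono) auto
      then have "1 + b/2 \<le> 1 + (1 - \<alpha>) * b" by simp
      also have "\<dots> \<le> exp ((1 - \<alpha>) * b)" by (rule exp_ge_add_one_self)
      finally show "1 + b/2 \<le> exp ((1 - \<alpha>) * b)" .
    qed (use L0 nn b0 in auto)
    also have "\<dots> = 1024 * L * exp (2 * (1 - \<alpha>) * a)"
    proof -
      have "L + (-(1/8)) + (1 - \<alpha>) * b = 2 * (1 - \<alpha>) * a"
        unfolding b_def using aL by (simp add: algebra_simps)
      then have "exp L * (exp (-(1/8)) * exp ((1 - \<alpha>) * b)) = exp (2 * (1 - \<alpha>) * a)"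
        by (simp add: exp_add[symmetric] add.assoc)
      then show ?thesis unfolding nnL by (simp add: mult.assoc)
    qed
    also have "\<dots> \<le> 1024 * s * L * exp (2 * (1 - \<alpha>) * a)"
    proof -
      have "0 \<le> 1024 * L * exp (2 * (1 - \<alpha>) * a)" using L0 by simp
      then have "1 * (1024 * L * exp (2 * (1 - \<alpha>) * a)) \<le> s * (1024 * L * exp (2 * (1 - \<alpha>) * a))"
        using s by (intro mult_right_mono) auto
      then show ?thesis by (simp add: mult_ac)
    qed
    finally show ?thesis unfolding rhs[unfolded \<alpha>_def] \<alpha>_def .
  qed
qed


lemma sqrt_pow_split:
  fixes D e \<alpha> :: real
  assumes D: "0 < D" and e: "0 < e"
  shows "(D / e) powr (1 - \<alpha>) = D powr (1 - \<alpha>) * e powr (\<alpha> - 1)"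
proof -
  have "(D / e) powr (1 - \<alpha>) = D powr (1 - \<alpha>) / e powr (1 - \<alpha>)" by (rule powr_divide)
  also have "e powr (\<alpha> - 1) = 1 / e powr (1 - \<alpha>)"
    using powr_minus_divide[of e "1 - \<alpha>"] by simp
  ultimately show ?thesis by simp
qed

lemma final_eq:
  assumes G: "0 \<le> \<Gamma>" and m: "0 < m" and R: "0 \<le> R" and P: "0 \<le> P" and k: "0 \<le> k"
  shows "k * (\<Gamma> * sqrt R / sqrt m) * sqrt (R * P) = sqrt (k\<^sup>2 * \<Gamma>\<^sup>2 * R\<^sup>2 * P / m)"
proof -
  have "k\<^sup>2 * \<Gamma>\<^sup>2 * R\<^sup>2 * P / m = (k * (\<Gamma> * sqrt R / sqrt m))\<^sup>2 * (R * P)"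
    using m R by (simp add: power_mult_distrib power_divide field_simps power2_eq_square)
  then have "sqrt (k\<^sup>2 * \<Gamma>\<^sup>2 * R\<^sup>2 * P / m) = \<bar>k * (\<Gamma> * sqrt R / sqrt m)\<bar> * sqrt (R * P)"
    by (simp add: real_sqrt_mult)
  also have "\<bar>k * (\<Gamma> * sqrt R / sqrt m)\<bar> = k * (\<Gamma> * sqrt R / sqrt m)" using G m R k by simp
  finally show ?thesis by simp
qed

lemma S_part:
  assumes n: "2 \<le> n1" "2 \<le> n2" and s: "1 \<le> s1" "s1 \<le> n1" "1 \<le> s2" "s2 \<le> n2"
    and R: "1 \<le> R" "R \<le> min n1 n2" and G: "1 \<le> \<Gamma>" and m: "1 \<le> m"
  shows "((\<lambda>\<epsilon>. sqrt (ln (real (covering_number n1 n2 (S_set n1 n2 s1 s2 R \<Gamma>) (sqrt m * \<epsilon>)))))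
         integrable_on {0 .. \<Gamma> * sqrt R / sqrt m}) \<and>
     integral {0 .. \<Gamma> * sqrt R / sqrt m}
       (\<lambda>\<epsilon>. sqrt (ln (real (covering_number n1 n2 (S_set n1 n2 s1 s2 R \<Gamma>) (sqrt m * \<epsilon>)))))
       \<le> sqrt (64 * \<Gamma>\<^sup>2 * (real R)\<^sup>2 * real (s1 + s2) * ln (real (max n1 n2)) / real m)"
proof -
  define D where "D = \<Gamma> * sqrt R / sqrt m"
  define L where "L = ln (real (max n1 n2))"
  define M where "M = S_set n1 n2 s1 s2 R \<Gamma>"
  define f where "f = (\<lambda>\<epsilon>. sqrt (ln (real (covering_number n1 n2 M (sqrt m * \<epsilon>)))))"
  have sm: "0 < sqrt m" using m by simp
  have sR: "1 \<le> sqrt R" using R by simp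
  have D0: "0 < D" unfolding D_def using G sR sm by simp
  have L2: "ln 2 \<le> L" unfolding L_def using n by simp
  have L0: "0 \<le> L" using L2 ln_ge_zero[of 2] by linarith
  have n1: "1 \<le> n1" "1 \<le> n2" using n by auto
  have covS: "\<exists>C. finite C \<and> C \<subseteq> mat_space n1 n2 \<and> (\<forall>Z\<in>M. \<exists>W\<in>C. frob_dist n1 n2 Z W \<le> sqrt m * e)
      \<and> ln (real (card C)) \<le> 16 * real R * real (s1 + s2) * L * (D / e)" if e: "0 < e" "e \<le> D" for e
  proof -
    have d0: "0 < sqrt m * e" using e sm by simp
    have d1: "sqrt m * e \<le> \<Gamma> * sqrt R"
    proof -
      have "sqrt m * e \<le> sqrt m * D" using e sm by simp
      also have "sqrt m * D = \<Gamma> * sqrt R" unfolding D_def using sm by simp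
      finally show ?thesis .
    qed
    have eq: "\<Gamma> * sqrt R / (sqrt m * e) = D / e" unfolding D_def using sm e by (simp add: field_simps)
    show ?thesis using S_cover[OF n1 s R G d0 d1] L2 unfolding eq M_def L_def by blast
  qed
  have "f integrable_on {0..D} \<and> integral {0..D} f \<le> (4 * sqrt (real R * real (s1 + s2) * L)) * D / (1/2)"
  proof (rule dudley_integral[OF D0])
    show "0 < (1/2::real)" "(1/2::real) \<le> 1" by auto
    show "0 \<le> 4 * sqrt (real R * real (s1 + s2) * L)" using L0 by simp
    show "0 \<le> f e" for e unfolding f_def by (rule sqrt_ln_nat_nonneg)
    show "f b \<le> f a" if ab: "0 < a" "a \<le> b" "b \<le> D" for a b
    proof -
      obtain C where C: "finite C" "C \<subseteq> mat_space n1 n2" "\<forall>Z\<in>M. \<exists>W\<in>C. frob_dist n1 n2 Z W \<le> sqrt m * a"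
        using covS[of a] ab by auto
      have "covering_number n1 n2 M (sqrt m * b) \<le> covering_number n1 n2 M (sqrt m * a)"
        by (rule cov_anti[OF C]) (use ab sm in simp)
      then show ?thesis unfolding f_def by (rule sqrt_ln_nat_mono)
    qed
    show "f e \<le> 4 * sqrt (real R * real (s1 + s2) * L) * D powr (1 - 1/2) * e powr (1/2 - 1)"
      if e: "0 < e" "e \<le> D" for e
    proof -
      obtain C where C: "finite C" "C \<subseteq> mat_space n1 n2" "\<forall>Z\<in>M. \<exists>W\<in>C. frob_dist n1 n2 Z W \<le> sqrt m * e"
        "ln (real (card C)) \<le> 16 * real R * real (s1 + s2) * L * (D / e)"
        using covS[OF e] by blast
      have "f e \<le> sqrt (ln (real (card C)))" unfolding f_def
        by (rule sqrt_ln_nat_mono[OF cov_le_card[OF C(1-3)]])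
      also have "\<dots> \<le> sqrt (16 * real R * real (s1 + s2) * L * (D / e))" using C(4) by simp
      also have "\<dots> = 4 * sqrt (real R * real (s1 + s2) * L) * sqrt (D / e)"
      proof -
        have e1: "sqrt (4\<^sup>2 * (A * B)) = 4 * sqrt A * sqrt B" for A B :: real
          by (simp add: real_sqrt_mult)
        have X: "16 * real R * real (s1 + s2) * L * (D / e) = 4\<^sup>2 * ((real R * real (s1 + s2) * L) * (D / e))"
          by simp
        show ?thesis unfolding X by (rule e1)
      qed
      also have "sqrt (D / e) = (D / e) powr (1/2)" using D0 e by (simp add: powr_half_sqrt)
      also have "\<dots> = D powr (1 - 1/2) * e powr (1/2 - 1)" using sqrt_pow_split[OF D0 e(1), of "1/2"] by simp
      finally show ?thesis by (simp add: mult.assoc)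
    qed
  qed
  moreover have "(4 * sqrt (real R * real (s1 + s2) * L)) * D / (1/2) =
      sqrt (64 * \<Gamma>\<^sup>2 * (real R)\<^sup>2 * real (s1 + s2) * L / real m)"
  proof -
    have "(4 * sqrt (real R * real (s1 + s2) * L)) * D / (1/2) = 8 * (\<Gamma> * sqrt R / sqrt m) * sqrt (real R * (real (s1 + s2) * L))"
      unfolding D_def by (simp add: mult_ac)
    also have "\<dots> = sqrt (8\<^sup>2 * \<Gamma>\<^sup>2 * (real R)\<^sup>2 * (real (s1 + s2) * L) / real m)"
      by (rule final_eq) (use G m L0 in auto)
    finally show ?thesis by (simp add: mult_ac)
  qed
  ultimately show ?thesis unfolding f_def M_def D_def L_def by simp
qed


lemma K_part:
  assumes n: "2 \<le> n1" "2 \<le> n2" and s: "1 \<le> s1" "s1 \<le> n1" "1 \<le> s2" "s2 \<le> n2"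
    and R: "1 \<le> R" "R \<le> min n1 n2" and G: "1 \<le> \<Gamma>" and m: "1 \<le> m"
  shows "((\<lambda>\<epsilon>. sqrt (ln (real (covering_number n1 n2 (KR_set n1 n2 s1 s2 R \<Gamma>) (sqrt m * \<epsilon>)))))
         integrable_on {0 .. \<Gamma> * sqrt R / sqrt m}) \<and>
     integral {0 .. \<Gamma> * sqrt R / sqrt m}
       (\<lambda>\<epsilon>. sqrt (ln (real (covering_number n1 n2 (KR_set n1 n2 s1 s2 R \<Gamma>) (sqrt m * \<epsilon>)))))
       \<le> sqrt (65536 * \<Gamma>\<^sup>2 * (real R)\<^sup>2 * real (s1 + s2) * (ln (real (max n1 n2)))^3 / real m)"
proof -
  define D where "D = \<Gamma> * sqrt R / sqrt m"
  define L where "L = ln (real (max n1 n2))"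
  define M where "M = KR_set n1 n2 s1 s2 R \<Gamma>"
  define f where "f = (\<lambda>\<epsilon>. sqrt (ln (real (covering_number n1 n2 M (sqrt m * \<epsilon>)))))"
  define \<alpha> where "\<alpha> = 1 / (8 * L)"
  define P where "P = real R * real (s1 + s2) * L"
  have sm: "0 < sqrt m" using m by simp
  have sR: "1 \<le> sqrt R" using R by simp
  have D0: "0 < D" unfolding D_def using G sR sm by simp
  have L2: "ln 2 \<le> L" unfolding L_def using n by simp
  have L0: "0 < L" using L2 ln_gt_zero[of 2] by linarith
  have L23: "2/3 \<le> L" using L2 ln2_ge_two_thirds by linarith
  have al: "0 < \<alpha>" "\<alpha> \<le> 1" unfolding \<alpha>_def using L0 L23 by (auto simp: field_simps)
  have P0: "0 \<le> P" unfolding P_def using L0 by simp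
  have n1: "1 \<le> n1" "1 \<le> n2" using n by auto
  have covK: "\<exists>C. finite C \<and> C \<subseteq> mat_space n1 n2 \<and> (\<forall>Z\<in>M. \<exists>W\<in>C. frob_dist n1 n2 Z W \<le> sqrt m * e)
      \<and> ln (real (card C)) \<le> 3 * real R * min (real (max n1 n2)) (37 * real (s1 + s2) * (D / e)\<^sup>2)
         * (7 * L + ln (D / e))" if e: "0 < e" "e \<le> D" for e
  proof -
    have d0: "0 < sqrt m * e" using e sm by simp
    have d1: "sqrt m * e \<le> \<Gamma> * sqrt R"
    proof -
      have "sqrt m * e \<le> sqrt m * D" using e sm by simp
      also have "sqrt m * D = \<Gamma> * sqrt R" unfolding D_def using sm by simp
      finally show ?thesis .
    qed
    have eq: "\<Gamma> * sqrt R / (sqrt m * e) = D / e" unfolding D_def using sm e by (simp add: field_simps)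
    show ?thesis using K_cover[OF n1 s R G d0 d1] L2 unfolding eq M_def L_def by blast
  qed
  have "f integrable_on {0..D} \<and> integral {0..D} f \<le> (32 * sqrt P) * D / \<alpha>"
  proof (rule dudley_integral[OF D0 al])
    show "0 \<le> 32 * sqrt P" using P0 by simp
    show "0 \<le> f e" for e unfolding f_def by (rule sqrt_ln_nat_nonneg)
    show "f b \<le> f a" if ab: "0 < a" "a \<le> b" "b \<le> D" for a b
    proof -
      obtain C where C: "finite C" "C \<subseteq> mat_space n1 n2" "\<forall>Z\<in>M. \<exists>W\<in>C. frob_dist n1 n2 Z W \<le> sqrt m * a"
        using covK[of a] ab by auto
      have "covering_number n1 n2 M (sqrt m * b) \<le> covering_number n1 n2 M (sqrt m * a)"
        by (rule cov_anti[OF C]) (use ab sm in simp)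
      then show ?thesis unfolding f_def by (rule sqrt_ln_nat_mono)
    qed
    show "f e \<le> 32 * sqrt P * D powr (1 - \<alpha>) * e powr (\<alpha> - 1)"
      if e: "0 < e" "e \<le> D" for e
    proof -
      define x where "x = D / e"
      have x1: "1 \<le> x" unfolding x_def using e by simp
      obtain C where C: "finite C" "C \<subseteq> mat_space n1 n2" "\<forall>Z\<in>M. \<exists>W\<in>C. frob_dist n1 n2 Z W \<le> sqrt m * e"
        "ln (real (card C)) \<le> 3 * real R * min (real (max n1 n2)) (37 * real (s1 + s2) * x\<^sup>2) * (7 * L + ln x)"
        using covK[OF e] unfolding x_def by blast
      have kp: "3 * min (real (max n1 n2)) (37 * real (s1 + s2) * x\<^sup>2) * (7 * L + ln x)
          \<le> 1024 * real (s1 + s2) * L * (x powr (1 - 1/(8*L)))\<^sup>2"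
        by (rule K_pointwise[OF L2 _ _ _ x1]) (use n s in \<open>auto simp: L_def\<close>)
      have "f e \<le> sqrt (ln (real (card C)))" unfolding f_def
        by (rule sqrt_ln_nat_mono[OF cov_le_card[OF C(1-3)]])
      also have "\<dots> \<le> sqrt (real R * (3 * min (real (max n1 n2)) (37 * real (s1 + s2) * x\<^sup>2) * (7 * L + ln x)))"
        using C(4) by (simp add: mult.assoc)
      also have "\<dots> \<le> sqrt (real R * (1024 * real (s1 + s2) * L * (x powr (1 - \<alpha>))\<^sup>2))"
        using kp unfolding \<alpha>_def by (intro real_sqrt_le_mono mult_left_mono) auto
      also have "\<dots> = 32 * sqrt P * x powr (1 - \<alpha>)"
      proof -
        have "real R * (1024 * real (s1 + s2) * L * (x powr (1 - \<alpha>))\<^sup>2) = (32 * x powr (1 - \<alpha>))\<^sup>2 * P"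
          unfolding P_def by (simp add: power_mult_distrib)
        then have "sqrt (real R * (1024 * real (s1 + s2) * L * (x powr (1 - \<alpha>))\<^sup>2)) = sqrt ((32 * x powr (1 - \<alpha>))\<^sup>2 * P)"
          by (simp only:)
        also have "\<dots> = \<bar>32 * x powr (1 - \<alpha>)\<bar> * sqrt P"
          by (simp only: real_sqrt_mult real_sqrt_abs)
        also have "\<bar>32 * x powr (1 - \<alpha>)\<bar> = 32 * x powr (1 - \<alpha>)" by simp
        finally show ?thesis by (simp only: mult_ac)
      qed
      also have "x powr (1 - \<alpha>) = D powr (1 - \<alpha>) * e powr (\<alpha> - 1)"
        unfolding x_def by (rule sqrt_pow_split[OF D0 e(1)])
      finally show ?thesis by (simp add: mult.assoc)
    qed
  qed
  moreover have "(32 * sqrt P) * D / \<alpha> =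
      sqrt (65536 * \<Gamma>\<^sup>2 * (real R)\<^sup>2 * real (s1 + s2) * L^3 / real m)"
  proof -
    have "(32 * sqrt P) * D / \<alpha> = (256 * L) * (\<Gamma> * sqrt R / sqrt m) * sqrt (real R * (real (s1 + s2) * L))"
      unfolding D_def \<alpha>_def P_def by (simp add: mult_ac)
    also have "\<dots> = sqrt ((256 * L)\<^sup>2 * \<Gamma>\<^sup>2 * (real R)\<^sup>2 * (real (s1 + s2) * L) / real m)"
      by (rule final_eq) (use G m L0 in auto)
    also have "(256 * L)\<^sup>2 * \<Gamma>\<^sup>2 * (real R)\<^sup>2 * (real (s1 + s2) * L) / real m
       = 65536 * \<Gamma>\<^sup>2 * (real R)\<^sup>2 * real (s1 + s2) * L^3 / real m"
      by (simp add: power2_eq_square power3_eq_cube)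
    finally show ?thesis .
  qed
  ultimately show ?thesis unfolding f_def M_def D_def L_def by simp
qed

theorem mainTheorem11:
  "\<exists>CS>0. \<exists>CK>0. \<forall>(n1::nat) (n2::nat) (s1::nat) (s2::nat) (R::nat) (\<Gamma>::real) (m::nat).
     2 \<le> n1 \<and> 2 \<le> n2 \<and> 1 \<le> s1 \<and> s1 \<le> n1 \<and> 1 \<le> s2 \<and> s2 \<le> n2 \<and>
     1 \<le> R \<and> R \<le> min n1 n2 \<and> 1 \<le> \<Gamma> \<and> 1 \<le> m \<longrightarrow>
     ((\<lambda>\<epsilon>. sqrt (ln (real (covering_number n1 n2 (S_set n1 n2 s1 s2 R \<Gamma>) (sqrt m * \<epsilon>)))))
         integrable_on {0 .. \<Gamma> * sqrt R / sqrt m}) \<and>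
     integral {0 .. \<Gamma> * sqrt R / sqrt m}
       (\<lambda>\<epsilon>. sqrt (ln (real (covering_number n1 n2 (S_set n1 n2 s1 s2 R \<Gamma>) (sqrt m * \<epsilon>)))))
       \<le> sqrt (CS * \<Gamma>\<^sup>2 * (real R)\<^sup>2 * real (s1 + s2) * ln (real (max n1 n2)) / real m) \<and>
     ((\<lambda>\<epsilon>. sqrt (ln (real (covering_number n1 n2 (KR_set n1 n2 s1 s2 R \<Gamma>) (sqrt m * \<epsilon>)))))
         integrable_on {0 .. \<Gamma> * sqrt R / sqrt m}) \<and>
     integral {0 .. \<Gamma> * sqrt R / sqrt m}
       (\<lambda>\<epsilon>. sqrt (ln (real (covering_number n1 n2 (KR_set n1 n2 s1 s2 R \<Gamma>) (sqrt m * \<epsilon>)))))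
       \<le> sqrt (CK * \<Gamma>\<^sup>2 * (real R)\<^sup>2 * real (s1 + s2) * (ln (real (max n1 n2)))^3 / real m)"
proof (rule exI[of _ 64], rule conjI, simp, rule exI[of _ 65536], rule conjI, simp, intro allI impI)
  fix n1 n2 s1 s2 R :: nat and \<Gamma> :: real and m :: nat
  assume h: "2 \<le> n1 \<and> 2 \<le> n2 \<and> 1 \<le> s1 \<and> s1 \<le> n1 \<and> 1 \<le> s2 \<and> s2 \<le> n2 \<and>
     1 \<le> R \<and> R \<le> min n1 n2 \<and> 1 \<le> \<Gamma> \<and> 1 \<le> m"
  show "((\<lambda>\<epsilon>. sqrt (ln (real (covering_number n1 n2 (S_set n1 n2 s1 s2 R \<Gamma>) (sqrt m * \<epsilon>)))))
         integrable_on {0 .. \<Gamma> * sqrt R / sqrt m}) \<and>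
     integral {0 .. \<Gamma> * sqrt R / sqrt m}
       (\<lambda>\<epsilon>. sqrt (ln (real (covering_number n1 n2 (S_set n1 n2 s1 s2 R \<Gamma>) (sqrt m * \<epsilon>)))))
       \<le> sqrt (64 * \<Gamma>\<^sup>2 * (real R)\<^sup>2 * real (s1 + s2) * ln (real (max n1 n2)) / real m) \<and>
     ((\<lambda>\<epsilon>. sqrt (ln (real (covering_number n1 n2 (KR_set n1 n2 s1 s2 R \<Gamma>) (sqrt m * \<epsilon>)))))
         integrable_on {0 .. \<Gamma> * sqrt R / sqrt m}) \<and>
     integral {0 .. \<Gamma> * sqrt R / sqrt m}
       (\<lambda>\<epsilon>. sqrt (ln (real (covering_number n1 n2 (KR_set n1 n2 s1 s2 R \<Gamma>) (sqrt m * \<epsilon>)))))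
       \<le> sqrt (65536 * \<Gamma>\<^sup>2 * (real R)\<^sup>2 * real (s1 + s2) * (ln (real (max n1 n2)))^3 / real m)"
    using S_part[of n1 n2 s1 s2 R \<Gamma> m] K_part[of n1 n2 s1 s2 R \<Gamma> m] h by blast
qed


end
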